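(* Let $X$ be a closed subset of $\mathbb{R}^n$, let $p\in\mathbb{N}$, and let $f:X\to\mathbb{R}$. If $f$ is the restriction to $X$ of a function of class $\mathcal{C}^p$ on $\mathbb{R}^n$, then $\nabla^p f:\tau^p(X)\to\mathbb{R}$ (i.e. $\nabla^p f$ is the graph of a function on $\tau^p(X)$). Moreover, if $F\in\mathcal{C}^p(\mathbb{R}^n)$ and $F|X=f$, then for all $a\in X$ and all $\xi\in\tau^p_a(X)\subset\mathcal{P}_p^*$, $$\nabla^p f(\xi)=\xi(T^p_aF),$$ where $T^p_aF$ is the Taylor polynomial of order $p$ of $F$ at $a$.
   Context: Notation. $\mathbb{N}$ denotes the nonnegative integers; multiindex notation $\alpha\in\mathbb{N}^n$, $|\alpha|=\alpha_1+\dots+\alpha_n$, $\alpha!=\alpha_1!\cdots\alpha_n!$, $x^\alpha=x_1^{\alpha_1}\cdots x_n^{\alpha_n}$. $\mathcal{P}_p=\mathcal{P}_p(\mathbb{R}^n)$ is the real vector space of polynomial functions on $\mathbb{R}^n$ of degree at most $p$, $\mathcal{P}_p^*$ its dual, and $r=\dim\mathcal{P}_p$. For $\xi\in\mathcal{P}_p^*$, $b\in\mathbb{R}^n$ and $|\alpha|\le p$ put $\xi_\alpha(b):=\xi\big(\tfrac{1}{\alpha!}(x-b)^\alpha\big)$. For $a\in\mathbb{R}^n$, $\delta_a\in\mathcal{P}_p^*$ is $\delta_a(P)=P(a)$. A bundle over $X$ with fibres in a finite-dimensional real vector space $W$ is a subset $E\subset X\times W$ such that each fibre $E_a=\{w:(a,w)\in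 E\}$ is a linear subspace of $W$. Paratangent bundle of order $p$. For a bundle $E\subset X\times\mathcal{P}_p^*$ let $\Delta E=\{(a,b,\xi+\eta): a,b\in X,\ \xi\in E_a,\ \eta\in E_b,\ |a-b|^{p-|\alpha|}|\eta_\alpha(b)|\le 1\text{ for all }|\alpha|\le p\}$, let $E'=\{(a,\xi)\in X\times\mathcal{P}_p^*: (a,a,\xi)\in\overline{\Delta E}\}$ (closure in $X\times X\times\mathcal{P}_p^*$), and let $\rho(E)=\{(a,\xi):a\in X,\ \xi\in\operatorname{Span}E'_a\}$. Let $E_0=\{(a,\lambda\delta_a):a\in X,\lambda\in\mathbb{R}\}$. The bundles $\rho^i(E_0)$ coincide for all $i\ge 2r$, and $\tau^p(X):=\rho^{2r}(E_0)$, with fibres $\tau^p_a(X)\subset\mathcal{P}_p^*$. The bundle $\nabla^p f$. For a bundle $\Phi\subset X\times(\mathcal{P}_p^*\times\mathbb{R})$ let $\Delta\Phi=\{(a,b,\xi+\eta,\lambda+\mu): a,b\in X,\ (\xi,\lambda)\in\Phi_a,\ (\eta,\mu)\in\Phi_b,\ |a-b|^{p-|\alpha|}|\eta_\alpha(b)|\le1\text{ for all }|\alpha|\le p\}$, $\Phi'=\{(a,\xi,\lambda):(a,a,\xi,\lambda)\in\overline{\Delta\Phi}\}$, and $\rho(\Phi)=\{(a,v): v\in\operatorname{Span}\Phi'_a\}$. Let $\Phi_0=\{(a,\lambda\delta_a,\lambda f(a)):a\in X,\lambda\in\mathbb{R}\}$; the bundles $\rho^i(\Phi_0)$ coincide for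 $i\ge 2(r+1)$ and $\nabla^pf:=\rho^{2(r+1)}(\Phi_0)$. One has $\nabla^pf\subset\tau^p(X)\times\mathbb{R}$. "$\nabla^pf:\tau^p(X)\to\mathbb{R}$" means that for each $a\in X$ and $\xi\in\tau^p_a(X)$ there is exactly one $\lambda$ with $(a,\xi,\lambda)\in\nabla^pf$; this $\lambda$ is denoted $\nabla^pf(\xi)$. *)

theory Defs
  imports "HOL-Analysis.Analysis"
begin

definition mabs :: "('n::finite \<Rightarrow> nat) \<Rightarrow> nat" where
  "mabs \<alpha> = (\<Sum>i\<in>UNIV. \<alpha> i)"

definition mfact :: "('n::finite \<Rightarrow> nat) \<Rightarrow> real" where
  "mfact \<alpha> = (\<Prod>i\<in>UNIV. fact (\<alpha> i))"

definition mpow :: "(real^'n::finite) \<Rightarrow> ('n \<Rightarrow> nat) \<Rightarrow> real" where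
  "mpow x \<alpha> = (\<Prod>i\<in>UNIV. (x $ i) ^ (\<alpha> i))"

definition midx :: "nat \<Rightarrow> ('n::finite \<Rightarrow> nat) set" where
  "midx p = {\<alpha>. mabs \<alpha> \<le> p}"

definition polys :: "nat \<Rightarrow> ((real^'n::finite) \<Rightarrow> real) set" where
  "polys p = {P. \<exists>c. \<forall>x. P x = (\<Sum>\<alpha>\<in>midx p. c \<alpha> * mpow x \<alpha>)}"

(* P_p^* : linear functionals on P_p, normalised to vanish outside P_p *)
definition dual :: "nat \<Rightarrow> (((real^'n::finite) \<Rightarrow> real) \<Rightarrow> real) set" where
  "dual p = {\<xi>. (\<forall>P\<in>polys p. \<forall>Q\<in>polys p. \<xi> (\<lambda>x. P x + Q x) = \<xi> P + \<xi> Q)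
                \<and> (\<forall>P\<in>polys p. \<forall>c. \<xi> (\<lambda>x. c * P x) = c * \<xi> P)
                \<and> (\<forall>P. P \<notin> polys p \<longrightarrow> \<xi> P = 0)}"

definition xi_alpha :: "(((real^'n::finite) \<Rightarrow> real) \<Rightarrow> real) \<Rightarrow> ('n \<Rightarrow> nat) \<Rightarrow> (real^'n) \<Rightarrow> real" where
  "xi_alpha \<xi> \<alpha> b = \<xi> (\<lambda>x. mpow (x - b) \<alpha> / mfact \<alpha>)"

definition delta :: "nat \<Rightarrow> (real^'n::finite) \<Rightarrow> ((real^'n) \<Rightarrow> real) \<Rightarrow> real" where
  "delta p a = (\<lambda>P. if P \<in> polys p then P a else 0)"

(* coordinates of a functional in the monomial basis; gives P_p^* its (finite-dimensional) topology *)
definition coord :: "nat \<Rightarrow> (((real^'n::finite) \<Rightarrow> real) \<Rightarrow> real) \<Rightarrow> ('n \<Rightarrow> nat) \<Rightarrow> real" where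
  "coord p \<xi> = (\<lambda>\<alpha>. if \<alpha> \<in> midx p then \<xi> (\<lambda>x. mpow x \<alpha>) else 0)"

definition lspan :: "(('a \<Rightarrow> real) \<Rightarrow> real) set \<Rightarrow> (('a \<Rightarrow> real) \<Rightarrow> real) set" where
  "lspan S = {(\<lambda>P. \<Sum>\<xi>\<in>T. c \<xi> * \<xi> P) | T c. finite T \<and> T \<subseteq> S}"

definition lspan2 :: "((('a \<Rightarrow> real) \<Rightarrow> real) \<times> real) set \<Rightarrow> ((('a \<Rightarrow> real) \<Rightarrow> real) \<times> real) set" where
  "lspan2 S = {((\<lambda>P. \<Sum>v\<in>T. c v * fst v P), (\<Sum>v\<in>T. c v * snd v)) | T c. finite T \<and> T \<subseteq> S}"

definition Delta_E :: "nat \<Rightarrow> (real^'n::finite) set \<Rightarrow> ((real^'n) \<times> (((real^'n) \<Rightarrow> real) \<Rightarrow> real)) set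
     \<Rightarrow> ((real^'n) \<times> (real^'n) \<times> (((real^'n) \<Rightarrow> real) \<Rightarrow> real)) set" where
  "Delta_E p X E = {(a, b, (\<lambda>P. \<xi> P + \<eta> P)) | a b \<xi> \<eta>.
      a \<in> X \<and> b \<in> X \<and> (a, \<xi>) \<in> E \<and> (b, \<eta>) \<in> E \<and>
      (\<forall>\<alpha>\<in>midx p. norm (a - b) ^ (p - mabs \<alpha>) * \<bar>xi_alpha \<eta> \<alpha> b\<bar> \<le> 1)}"

definition Eprime :: "nat \<Rightarrow> (real^'n::finite) set \<Rightarrow> ((real^'n) \<times> (((real^'n) \<Rightarrow> real) \<Rightarrow> real)) set
     \<Rightarrow> ((real^'n) \<times> (((real^'n) \<Rightarrow> real) \<Rightarrow> real)) set" where
  "Eprime p X E = {(a, \<xi>). a \<in> X \<and> \<xi> \<in> dual p \<and>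
      (a, a, coord p \<xi>) \<in> closure ((\<lambda>(a, b, \<eta>). (a, b, coord p \<eta>)) ` Delta_E p X E)}"

definition rho :: "nat \<Rightarrow> (real^'n::finite) set \<Rightarrow> ((real^'n) \<times> (((real^'n) \<Rightarrow> real) \<Rightarrow> real)) set
     \<Rightarrow> ((real^'n) \<times> (((real^'n) \<Rightarrow> real) \<Rightarrow> real)) set" where
  "rho p X E = {(a, \<xi>). a \<in> X \<and> \<xi> \<in> lspan {\<eta>. (a, \<eta>) \<in> Eprime p X E}}"

definition E0 :: "nat \<Rightarrow> (real^'n::finite) set \<Rightarrow> ((real^'n) \<times> (((real^'n) \<Rightarrow> real) \<Rightarrow> real)) set" where
  "E0 p X = {(a, (\<lambda>P. l * delta p a P)) | a l. a \<in> X}"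

definition tau :: "nat \<Rightarrow> (real^'n::finite) set \<Rightarrow> ((real^'n) \<times> (((real^'n) \<Rightarrow> real) \<Rightarrow> real)) set" where
  "tau p X = (rho p X ^^ (2 * card (midx p :: ('n \<Rightarrow> nat) set))) (E0 p X)"

definition Delta_Phi :: "nat \<Rightarrow> (real^'n::finite) set \<Rightarrow> ((real^'n) \<times> (((real^'n) \<Rightarrow> real) \<Rightarrow> real) \<times> real) set
     \<Rightarrow> ((real^'n) \<times> (real^'n) \<times> (((real^'n) \<Rightarrow> real) \<Rightarrow> real) \<times> real) set" where
  "Delta_Phi p X \<Phi> = {(a, b, (\<lambda>P. \<xi> P + \<eta> P), l + m) | a b \<xi> l \<eta> m.
      a \<in> X \<and> b \<in> X \<and> (a, \<xi>, l) \<in> \<Phi> \<and> (b, \<eta>, m) \<in> \<Phi> \<and>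
      (\<forall>\<alpha>\<in>midx p. norm (a - b) ^ (p - mabs \<alpha>) * \<bar>xi_alpha \<eta> \<alpha> b\<bar> \<le> 1)}"

definition Phiprime :: "nat \<Rightarrow> (real^'n::finite) set \<Rightarrow> ((real^'n) \<times> (((real^'n) \<Rightarrow> real) \<Rightarrow> real) \<times> real) set
     \<Rightarrow> ((real^'n) \<times> (((real^'n) \<Rightarrow> real) \<Rightarrow> real) \<times> real) set" where
  "Phiprime p X \<Phi> = {(a, \<xi>, l). a \<in> X \<and> \<xi> \<in> dual p \<and>
      (a, a, coord p \<xi>, l) \<in> closure ((\<lambda>(a, b, \<eta>, m). (a, b, coord p \<eta>, m)) ` Delta_Phi p X \<Phi>)}"

definition rhoPhi :: "nat \<Rightarrow> (real^'n::finite) set \<Rightarrow> ((real^'n) \<times> (((real^'n) \<Rightarrow> real) \<Rightarrow> real) \<times> real) set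
     \<Rightarrow> ((real^'n) \<times> (((real^'n) \<Rightarrow> real) \<Rightarrow> real) \<times> real) set" where
  "rhoPhi p X \<Phi> = {(a, v). a \<in> X \<and> v \<in> lspan2 {w. (a, w) \<in> Phiprime p X \<Phi>}}"

definition Phi0 :: "nat \<Rightarrow> (real^'n::finite) set \<Rightarrow> ((real^'n) \<Rightarrow> real)
     \<Rightarrow> ((real^'n) \<times> (((real^'n) \<Rightarrow> real) \<Rightarrow> real) \<times> real) set" where
  "Phi0 p X f = {(a, (\<lambda>P. l * delta p a P), l * f a) | a l. a \<in> X}"

definition nabla :: "nat \<Rightarrow> (real^'n::finite) set \<Rightarrow> ((real^'n) \<Rightarrow> real)
     \<Rightarrow> ((real^'n) \<times> (((real^'n) \<Rightarrow> real) \<Rightarrow> real) \<times> real) set" where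
  "nabla p X f = (rhoPhi p X ^^ (2 * (card (midx p :: ('n \<Rightarrow> nat) set) + 1))) (Phi0 p X f)"

definition pdiff :: "'n::finite \<Rightarrow> ((real^'n) \<Rightarrow> real) \<Rightarrow> (real^'n) \<Rightarrow> real" where
  "pdiff i F x = deriv (\<lambda>t. F (x + t *\<^sub>R axis i 1)) 0"

fun Ck :: "nat \<Rightarrow> ((real^'n::finite) \<Rightarrow> real) \<Rightarrow> bool" where
  "Ck 0 F = continuous_on UNIV F"
| "Ck (Suc k) F = (continuous_on UNIV F \<and>
      (\<forall>i x. (\<lambda>t. F (x + t *\<^sub>R axis i 1)) differentiable (at 0)) \<and>
      (\<forall>i. Ck k (pdiff i F)))"

definition var_list :: "'n::finite list" where
  "var_list = (SOME xs. distinct xs \<and> set xs = UNIV)"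

(* D^alpha F (order of differentiation irrelevant for C^p functions by Schwarz) *)
definition mderiv :: "('n::finite \<Rightarrow> nat) \<Rightarrow> ((real^'n) \<Rightarrow> real) \<Rightarrow> (real^'n) \<Rightarrow> real" where
  "mderiv \<alpha> F = foldr (\<lambda>i G. (pdiff i ^^ (\<alpha> i)) G) var_list F"

definition taylor :: "nat \<Rightarrow> (real^'n::finite) \<Rightarrow> ((real^'n) \<Rightarrow> real) \<Rightarrow> (real^'n) \<Rightarrow> real" where
  "taylor p a F = (\<lambda>x. \<Sum>\<alpha>\<in>midx p. mderiv \<alpha> F a / mfact \<alpha> * mpow (x - a) \<alpha>)"

end

theory Submission
  imports Defs "HOL-Library.FuncSet"
begin

lemma finite_midx: "finite (midx p :: ('n::finite \<Rightarrow> nat) set)"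
proof -
  have "midx p \<subseteq> PiE (UNIV::'n set) (\<lambda>_. {..p})"
  proof
    fix \<alpha> :: "'n \<Rightarrow> nat" assume "\<alpha> \<in> midx p"
    hence s: "(\<Sum>i\<in>UNIV. \<alpha> i) \<le> p" by (simp add: midx_def mabs_def)
    have "\<alpha> i \<le> p" for i using member_le_sum[of i UNIV \<alpha>] s by simp
    thus "\<alpha> \<in> PiE UNIV (\<lambda>_. {..p})" by auto
  qed
  thus ?thesis by (rule finite_subset) (simp add: finite_PiE)
qed

lemma mabs_zero[simp]: "mabs (\<lambda>_. 0) = 0" by (simp add: mabs_def)
lemma mfact_zero[simp]: "mfact (\<lambda>_. 0) = 1" by (simp add: mfact_def)
lemma mpow_zero[simp]: "mpow x (\<lambda>_. 0) = 1" by (simp add: mpow_def)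
lemma zero_midx[simp]: "(\<lambda>_. 0) \<in> midx p" by (simp add: midx_def)
lemma mfact_pos: "mfact \<alpha> > 0" by (simp add: mfact_def prod_pos)
lemma mfact_nz[simp]: "mfact \<alpha> \<noteq> 0" using mfact_pos[of \<alpha>] by simp

lemma mpow_0_vec: "mpow (0::real^'n::finite) \<delta> = (if \<delta> = (\<lambda>_. 0) then 1 else 0)"
proof (cases "\<delta> = (\<lambda>_. 0)")
  case False
  then obtain i where "\<delta> i \<noteq> 0" by auto
  hence "\<exists>j\<in>UNIV. (0::real^'n) $ j ^ \<delta> j = 0" by auto
  thus ?thesis using False unfolding mpow_def by (subst prod_zero) auto
qed simp

lemma mabs_add: "mabs (\<lambda>i. \<gamma> i + \<delta> i) = mabs \<gamma> + mabs \<delta>"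
  by (simp add: mabs_def sum.distrib)

lemma mabs_le: "(\<forall>i. \<gamma> i \<le> \<beta> i) \<Longrightarrow> mabs \<gamma> \<le> mabs \<beta>"
  by (simp add: mabs_def sum_mono)

definition pol :: "nat \<Rightarrow> (('n::finite \<Rightarrow> nat) \<Rightarrow> real) \<Rightarrow> (real^'n) \<Rightarrow> real" where
  "pol p c = (\<lambda>x. \<Sum>\<alpha>\<in>midx p. c \<alpha> * mpow x \<alpha>)"

lemma polys_iff: "P \<in> polys p \<longleftrightarrow> (\<exists>c. P = pol p c)"
  by (auto simp: polys_def pol_def fun_eq_iff)

lemma pol_in: "pol p c \<in> polys p" by (auto simp: polys_iff)

lemma polys_add: "P \<in> polys p \<Longrightarrow> Q \<in> polys p \<Longrightarrow> (\<lambda>x. P x + Q x) \<in> polys p"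
proof -
  assume "P \<in> polys p" "Q \<in> polys p"
  then obtain c d where "P = pol p c" "Q = pol p d" by (auto simp: polys_iff)
  hence "(\<lambda>x. P x + Q x) = pol p (\<lambda>\<alpha>. c \<alpha> + d \<alpha>)"
    by (simp add: pol_def fun_eq_iff sum.distrib algebra_simps)
  thus ?thesis by (simp add: pol_in)
qed

lemma polys_scale: "P \<in> polys p \<Longrightarrow> (\<lambda>x. c * P x) \<in> polys p"
proof -
  assume "P \<in> polys p"
  then obtain d where "P = pol p d" by (auto simp: polys_iff)
  hence "(\<lambda>x. c * P x) = pol p (\<lambda>\<alpha>. c * d \<alpha>)"
    by (simp add: pol_def fun_eq_iff sum_distrib_left algebra_simps)
  thus ?thesis by (simp add: pol_in)
qed

lemma polys_zero: "(\<lambda>x. 0) \<in> polys p"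
  using pol_in[of p "\<lambda>_. 0"] by (simp add: pol_def)

lemma polys_sum: "finite I \<Longrightarrow> (\<forall>i\<in>I. P i \<in> polys p) \<Longrightarrow> (\<lambda>x. \<Sum>i\<in>I. c i * P i x) \<in> polys p"
proof (induction I rule: finite_induct)
  case empty thus ?case by (simp add: polys_zero)
next
  case (insert j I)
  thus ?case by (simp add: polys_add polys_scale)
qed

lemma mono_in: "\<alpha> \<in> midx p \<Longrightarrow> (\<lambda>x. mpow x \<alpha>) \<in> polys p"
proof -
  assume a: "\<alpha> \<in> midx p"
  have "(\<lambda>x. mpow x \<alpha>) = pol p (\<lambda>\<beta>. if \<beta> = \<alpha> then 1 else 0)"
  proof
    fix x
    have "(\<Sum>\<beta>\<in>midx p. (if \<beta> = \<alpha> then 1 else 0) * mpow x \<beta>) = (\<Sum>\<beta>\<in>midx p. if \<beta> = \<alpha> then mpow x \<beta> else 0)"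
      by (rule sum.cong) auto
    also have "\<dots> = mpow x \<alpha>" using a by (simp add: finite_midx)
    finally show "mpow x \<alpha> = pol p (\<lambda>\<beta>. if \<beta> = \<alpha> then 1 else 0) x" by (simp add: pol_def)
  qed
  thus ?thesis by (simp add: pol_in)
qed

lemma dual_scale: "\<xi> \<in> dual p \<Longrightarrow> P \<in> polys p \<Longrightarrow> \<xi> (\<lambda>x. c * P x) = c * \<xi> P"
  unfolding dual_def by blast

lemma dual_addf: "\<xi> \<in> dual p \<Longrightarrow> P \<in> polys p \<Longrightarrow> Q \<in> polys p \<Longrightarrow> \<xi> (\<lambda>x. P x + Q x) = \<xi> P + \<xi> Q"
  unfolding dual_def by blast

lemma dual_sum:
  assumes "\<xi> \<in> dual p" "finite I" "\<forall>i\<in>I. P i \<in> polys p"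
  shows "\<xi> (\<lambda>x. \<Sum>i\<in>I. c i * P i x) = (\<Sum>i\<in>I. c i * \<xi> (P i))"
  using assms(2,3)
proof (induction I rule: finite_induct)
  case empty
  have "\<xi> (\<lambda>x. 0 * (\<lambda>x. 0) x) = 0 * \<xi> (\<lambda>x. 0)" by (rule dual_scale[OF assms(1) polys_zero])
  thus ?case by simp
next
  case (insert j I)
  have "\<xi> (\<lambda>x. \<Sum>i\<in>insert j I. c i * P i x) = \<xi> (\<lambda>x. c j * P j x + (\<Sum>i\<in>I. c i * P i x))"
    using insert by simp
  also have "\<dots> = \<xi> (\<lambda>x. c j * P j x) + \<xi> (\<lambda>x. (\<Sum>i\<in>I. c i * P i x))"
    using assms(1) insert polys_sum[of I P p c] polys_scale[of "P j" p "c j"] by (intro dual_addf) auto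
  also have "\<xi> (\<lambda>x. c j * P j x) = c j * \<xi> (P j)"
    using assms(1) insert by (intro dual_scale) auto
  finally show ?case using insert by simp
qed

lemma dual_pol: "\<xi> \<in> dual p \<Longrightarrow> \<xi> (pol p c) = (\<Sum>\<alpha>\<in>midx p. c \<alpha> * coord p \<xi> \<alpha>)"
  unfolding pol_def
  by (subst dual_sum) (auto simp: finite_midx mono_in coord_def)

lemma dual_sub: "\<xi> \<in> dual p \<Longrightarrow> P \<in> polys p \<Longrightarrow> Q \<in> polys p \<Longrightarrow> \<xi> P - \<xi> Q = \<xi> (\<lambda>x. P x - Q x)"
proof -
  assume a: "\<xi> \<in> dual p" "P \<in> polys p" "Q \<in> polys p"
  have "\<xi> (\<lambda>x. 1 * P x + (-1) * Q x) = 1 * \<xi> P + (-1) * \<xi> Q"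
    using dual_sum[OF a(1), of "{True, False}" "\<lambda>b. if b then P else Q" "\<lambda>b. if b then 1 else -1"] a
    by simp
  thus ?thesis by simp
qed

lemma dual_lin: "finite T \<Longrightarrow> T \<subseteq> dual p \<Longrightarrow> (\<lambda>P. \<Sum>\<xi>\<in>T. c \<xi> * \<xi> P) \<in> dual p"
proof -
  assume T: "finite T" "T \<subseteq> dual p"
  have 1: "(\<Sum>\<xi>\<in>T. c \<xi> * \<xi> (\<lambda>x. P x + Q x)) = (\<Sum>\<xi>\<in>T. c \<xi> * \<xi> P) + (\<Sum>\<xi>\<in>T. c \<xi> * \<xi> Q)"
    if "P \<in> polys p" "Q \<in> polys p" for P Q
    unfolding sum.distrib[symmetric] using T that
    by (intro sum.cong) (auto simp: dual_addf subset_iff distrib_left)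
  have 2: "(\<Sum>\<xi>\<in>T. c \<xi> * \<xi> (\<lambda>x. d * P x)) = d * (\<Sum>\<xi>\<in>T. c \<xi> * \<xi> P)"
    if "P \<in> polys p" for P d
    unfolding sum_distrib_left using T that
    by (intro sum.cong) (auto simp: dual_scale subset_iff)
  have 3: "(\<Sum>\<xi>\<in>T. c \<xi> * \<xi> P) = 0" if "P \<notin> polys p" for P
    using T that by (intro sum.neutral) (auto simp: dual_def subset_iff)
  show ?thesis unfolding dual_def using 1 2 3 by auto
qed

lemma dual_lin2: "finite T \<Longrightarrow> fst ` T \<subseteq> dual p \<Longrightarrow> (\<lambda>P. \<Sum>v\<in>T. c v * fst v P) \<in> dual p"
proof -
  assume T: "finite T" "fst ` T \<subseteq> dual p"
  have 1: "(\<Sum>v\<in>T. c v * fst v (\<lambda>x. P x + Q x)) = (\<Sum>v\<in>T. c v * fst v P) + (\<Sum>v\<in>T. c v * fst v Q)"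
    if "P \<in> polys p" "Q \<in> polys p" for P Q
    unfolding sum.distrib[symmetric] using T that
    by (intro sum.cong) (auto simp: dual_addf subset_iff distrib_left)
  have 2: "(\<Sum>v\<in>T. c v * fst v (\<lambda>x. d * P x)) = d * (\<Sum>v\<in>T. c v * fst v P)"
    if "P \<in> polys p" for P d
    unfolding sum_distrib_left using T that
    by (intro sum.cong) (auto simp: dual_scale subset_iff)
  have 3: "(\<Sum>v\<in>T. c v * fst v P) = 0" if "P \<notin> polys p" for P
    using T that by (intro sum.neutral) (auto simp: dual_def subset_iff)
  show ?thesis unfolding dual_def using 1 2 3 by auto
qed

lemma delta_dual: "(\<lambda>P. l * delta p a P) \<in> dual p"
  unfolding dual_def delta_def by (auto simp: polys_add polys_scale algebra_simps)

lemma dual_zero: "(\<lambda>P. 0) \<in> dual p" unfolding dual_def by auto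

lemma dual_add: "\<xi> \<in> dual p \<Longrightarrow> \<eta> \<in> dual p \<Longrightarrow> (\<lambda>P. \<xi> P + \<eta> P) \<in> dual p"
  unfolding dual_def by (auto simp: algebra_simps)

lemma Ck_Suc_imp: "Ck (Suc k) G \<Longrightarrow> Ck k G"
proof (induction k arbitrary: G)
  case 0 thus ?case by simp
next
  case (Suc k) thus ?case by auto
qed

lemma Ck_le: "j \<le> k \<Longrightarrow> Ck k G \<Longrightarrow> Ck j G"
proof (induction k)
  case 0 thus ?case by simp
next
  case (Suc k) thus ?case using Ck_Suc_imp le_Suc_eq by blast
qed

lemma Ck_cont: "Ck k G \<Longrightarrow> continuous_on UNIV G"
  by (cases k) auto

lemma Ck_appl: "length is \<le> k \<Longrightarrow> Ck k G \<Longrightarrow> Ck (k - length is) (foldr pdiff is G)"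
proof (induction "is")
  case Nil thus ?case by simp
next
  case (Cons i "is")
  hence "Ck (k - length is) (foldr pdiff is G)" by simp
  moreover have "k - length is = Suc (k - length (i # is))" using Cons.prems by simp
  ultimately show ?case by simp
qed

lemma line_deriv:
  assumes "Ck (Suc k) G"
  shows "((\<lambda>s. G (y + s *\<^sub>R axis i 1)) has_real_derivative pdiff i G (y + s0 *\<^sub>R axis i 1)) (at s0)"
proof -
  define z where "z = y + s0 *\<^sub>R axis i (1::real)"
  have "(\<lambda>t. G (z + t *\<^sub>R axis i 1)) differentiable (at 0)" using assms by simp
  hence "((\<lambda>t. G (z + t *\<^sub>R axis i 1)) has_real_derivative pdiff i G z) (at 0)"
    unfolding pdiff_def by (simp add: DERIV_deriv_iff_real_differentiable)
  moreover have "(\<lambda>t. G (z + t *\<^sub>R axis i 1)) = (\<lambda>t. (\<lambda>s. G (y + s *\<^sub>R axis i 1)) (t + s0))"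
  proof
    fix t
    have "z + t *\<^sub>R axis i 1 = y + (t + s0) *\<^sub>R axis i (1::real)"
      unfolding z_def scaleR_add_left by (simp add: add_ac)
    thus "G (z + t *\<^sub>R axis i 1) = (\<lambda>s. G (y + s *\<^sub>R axis i 1)) (t + s0)" by simp
  qed
  ultimately have "((\<lambda>t. (\<lambda>s. G (y + s *\<^sub>R axis i 1)) (t + s0)) has_real_derivative pdiff i G z) (at 0)"
    by simp
  hence "((\<lambda>s. G (y + s *\<^sub>R axis i 1)) has_real_derivative pdiff i G z) (at (0 + s0))"
    by (rule DERIV_shift[THEN iffD2])
  thus ?thesis by (simp add: z_def)
qed

lemma mixed_mvt:
  assumes G: "Ck 2 G" and h: "h > 0"
  shows "\<exists>s t. 0 < s \<and> s < h \<and> 0 < t \<and> t < h \<and>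
    G (x + h *\<^sub>R axis i 1 + h *\<^sub>R axis j 1) - G (x + h *\<^sub>R axis i 1) - G (x + h *\<^sub>R axis j 1) + G x
      = h * h * pdiff j (pdiff i G) (x + s *\<^sub>R axis i 1 + t *\<^sub>R axis j 1)"
proof -
  define u where "u = axis i (1::real)"
  define v where "v = axis j (1::real)"
  have G2: "Ck (Suc (Suc 0)) G" using G by (simp add: numeral_2_eq_2)
  hence G1: "Ck (Suc 0) (pdiff i G)" by simp
  define \<phi> where "\<phi> = (\<lambda>\<sigma>. G ((x + h *\<^sub>R v) + \<sigma> *\<^sub>R u) - G (x + \<sigma> *\<^sub>R u))"
  have "DERIV \<phi> \<sigma> :> (pdiff i G ((x + h *\<^sub>R v) + \<sigma> *\<^sub>R u) - pdiff i G (x + \<sigma> *\<^sub>R u))" for \<sigma>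
    unfolding \<phi>_def u_def by (intro derivative_intros line_deriv[OF G2])
  hence "\<exists>z. 0 < z \<and> z < h \<and> \<phi> h - \<phi> 0 = (h - 0) * (pdiff i G ((x + h *\<^sub>R v) + z *\<^sub>R u) - pdiff i G (x + z *\<^sub>R u))"
    by (intro MVT2[OF h])
  then obtain s where s: "0 < s" "s < h"
    "\<phi> h - \<phi> 0 = (h - 0) * (pdiff i G ((x + h *\<^sub>R v) + s *\<^sub>R u) - pdiff i G (x + s *\<^sub>R u))"
    by blast
  define \<psi> where "\<psi> = (\<lambda>\<tau>. pdiff i G ((x + s *\<^sub>R u) + \<tau> *\<^sub>R v))"
  have "DERIV \<psi> \<tau> :> pdiff j (pdiff i G) ((x + s *\<^sub>R u) + \<tau> *\<^sub>R v)" for \<tau>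
    unfolding \<psi>_def v_def by (rule line_deriv[OF G1])
  hence "\<exists>z. 0 < z \<and> z < h \<and> \<psi> h - \<psi> 0 = (h - 0) * pdiff j (pdiff i G) ((x + s *\<^sub>R u) + z *\<^sub>R v)"
    by (intro MVT2[OF h])
  then obtain t where t: "0 < t" "t < h"
    "\<psi> h - \<psi> 0 = (h - 0) * pdiff j (pdiff i G) ((x + s *\<^sub>R u) + t *\<^sub>R v)"
    by blast
  have "\<psi> h - \<psi> 0 = pdiff i G ((x + h *\<^sub>R v) + s *\<^sub>R u) - pdiff i G (x + s *\<^sub>R u)"
    unfolding \<psi>_def by (simp add: algebra_simps)
  moreover have "\<phi> h - \<phi> 0 = G (x + h *\<^sub>R u + h *\<^sub>R v) - G (x + h *\<^sub>R u) - G (x + h *\<^sub>R v) + G x"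
    unfolding \<phi>_def by (simp add: algebra_simps)
  ultimately have "G (x + h *\<^sub>R u + h *\<^sub>R v) - G (x + h *\<^sub>R u) - G (x + h *\<^sub>R v) + G x
      = h * h * pdiff j (pdiff i G) (x + s *\<^sub>R u + t *\<^sub>R v)"
    using s(3) t(3) by (metis diff_zero mult.assoc)
  thus ?thesis using s(1,2) t(1,2) unfolding u_def v_def by blast
qed

lemma schwarz:
  assumes G: "Ck 2 G"
  shows "pdiff j (pdiff i G) x = pdiff i (pdiff j G) x"
proof (rule ccontr)
  let ?A = "pdiff j (pdiff i G)" and ?B = "pdiff i (pdiff j G)"
  assume ne: "?A x \<noteq> ?B x"
  define e where "e = \<bar>?A x - ?B x\<bar> / 2"
  have e: "e > 0" using ne by (simp add: e_def)
  have G2: "Ck (Suc (Suc 0)) G" using G by (simp add: numeral_2_eq_2)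
  have cA: "continuous_on UNIV ?A" and cB: "continuous_on UNIV ?B" using G2 by auto
  have "continuous (at x) ?A" using cA by (simp add: continuous_on_eq_continuous_at)
  then obtain d1 where d1: "d1 > 0" "\<forall>y. dist y x < d1 \<longrightarrow> dist (?A y) (?A x) < e"
    using e unfolding continuous_at_eps_delta by metis
  have "continuous (at x) ?B" using cB by (simp add: continuous_on_eq_continuous_at)
  then obtain d2 where d2: "d2 > 0" "\<forall>y. dist y x < d2 \<longrightarrow> dist (?B y) (?B x) < e"
    using e unfolding continuous_at_eps_delta by metis
  define h where "h = min d1 d2 / 3"
  have h: "h > 0" using d1 d2 by (simp add: h_def)
  obtain s t where st: "0 < s" "s < h" "0 < t" "t < h"
    "G (x + h *\<^sub>R axis i 1 + h *\<^sub>R axis j 1) - G (x + h *\<^sub>R axis i 1) - G (x + h *\<^sub>R axis j 1) + G x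
      = h * h * ?A (x + s *\<^sub>R axis i 1 + t *\<^sub>R axis j 1)"
    using mixed_mvt[OF G h, of x i j] by blast
  obtain s' t' where st': "0 < s'" "s' < h" "0 < t'" "t' < h"
    "G (x + h *\<^sub>R axis j 1 + h *\<^sub>R axis i 1) - G (x + h *\<^sub>R axis j 1) - G (x + h *\<^sub>R axis i 1) + G x
      = h * h * ?B (x + s' *\<^sub>R axis j 1 + t' *\<^sub>R axis i 1)"
    using mixed_mvt[OF G h, of x j i] by blast
  have sw: "x + h *\<^sub>R axis j 1 + h *\<^sub>R axis i 1 = x + h *\<^sub>R axis i 1 + h *\<^sub>R axis j (1::real)"
    by (simp add: add_ac)
  have "h * h * ?A (x + s *\<^sub>R axis i 1 + t *\<^sub>R axis j 1) = h * h * ?B (x + s' *\<^sub>R axis j 1 + t' *\<^sub>R axis i 1)"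
    using st(5) st'(5) unfolding sw by linarith
  hence eq: "?A (x + s *\<^sub>R axis i 1 + t *\<^sub>R axis j 1) = ?B (x + s' *\<^sub>R axis j 1 + t' *\<^sub>R axis i 1)"
    using h by simp
  have n1: "norm (s *\<^sub>R axis i (1::real) + t *\<^sub>R axis j 1) < 3 * h"
  proof -
    have "norm (s *\<^sub>R axis i (1::real) + t *\<^sub>R axis j 1) \<le> norm (s *\<^sub>R axis i (1::real)) + norm (t *\<^sub>R axis j (1::real))"
      by (rule norm_triangle_ineq)
    also have "\<dots> = s + t" using st by simp
    finally show ?thesis using st by simp
  qed
  have n2: "norm (s' *\<^sub>R axis j (1::real) + t' *\<^sub>R axis i 1) < 3 * h"
  proof -
    have "norm (s' *\<^sub>R axis j (1::real) + t' *\<^sub>R axis i 1) \<le> norm (s' *\<^sub>R axis j (1::real)) + norm (t' *\<^sub>R axis i (1::real))"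
      by (rule norm_triangle_ineq)
    also have "\<dots> = s' + t'" using st' by simp
    finally show ?thesis using st' by simp
  qed
  have "dist (x + s *\<^sub>R axis i 1 + t *\<^sub>R axis j 1) x = norm (s *\<^sub>R axis i (1::real) + t *\<^sub>R axis j 1)"
    by (simp add: dist_norm)
  hence "dist (x + s *\<^sub>R axis i 1 + t *\<^sub>R axis j 1) x < d1"
    using n1 by (simp add: h_def)
  hence a: "\<bar>?A (x + s *\<^sub>R axis i 1 + t *\<^sub>R axis j 1) - ?A x\<bar> < e" using d1 by (simp add: dist_real_def)
  have "dist (x + s' *\<^sub>R axis j 1 + t' *\<^sub>R axis i 1) x = norm (s' *\<^sub>R axis j (1::real) + t' *\<^sub>R axis i 1)"
    by (simp add: dist_norm)
  hence "dist (x + s' *\<^sub>R axis j 1 + t' *\<^sub>R axis i 1) x < d2"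
    using n2 by (simp add: h_def)
  hence b: "\<bar>?B (x + s' *\<^sub>R axis j 1 + t' *\<^sub>R axis i 1) - ?B x\<bar> < e" using d2 by (simp add: dist_real_def)
  from a b eq have "\<bar>?A x - ?B x\<bar> < 2 * e" by linarith
  thus False unfolding e_def by simp
qed

lemma move_front:
  "Ck (length (js1 @ i # js2)) G \<Longrightarrow> foldr pdiff (js1 @ i # js2) G = foldr pdiff (i # js1 @ js2) G"
proof (induction js1)
  case Nil thus ?case by simp
next
  case (Cons j js1)
  have IH: "foldr pdiff (js1 @ i # js2) G = foldr pdiff (i # js1 @ js2) G"
    using Cons by (intro Cons.IH) (rule Ck_le[OF _ Cons.prems], simp)
  have "Ck (length (j # js1 @ i # js2) - length (js1 @ js2)) (foldr pdiff (js1 @ js2) G)"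
    using Cons.prems by (intro Ck_appl) auto
  hence "Ck 2 (foldr pdiff (js1 @ js2) G)"
    by (rule Ck_le[rotated]) simp
  hence "pdiff j (pdiff i (foldr pdiff (js1 @ js2) G)) = pdiff i (pdiff j (foldr pdiff (js1 @ js2) G))"
    by (intro ext schwarz)
  thus ?case using IH by simp
qed

lemma perm_apply: "mset is = mset js \<Longrightarrow> Ck (length is) G \<Longrightarrow> foldr pdiff is G = foldr pdiff js G"
proof (induction "is" arbitrary: js)
  case Nil thus ?case by simp
next
  case (Cons i "is")
  have "i \<in># mset js" using Cons.prems(1)[symmetric] by simp
  hence "i \<in> set js" by simp
  then obtain js1 js2 where js: "js = js1 @ i # js2" by (meson split_list)
  have m: "mset is = mset (js1 @ js2)" using Cons.prems(1) js by simp
  have "Ck (length is) G" by (rule Ck_le[OF _ Cons.prems(2)]) simp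
  hence "foldr pdiff is G = foldr pdiff (js1 @ js2) G"
    using m by (intro Cons.IH)
  hence "foldr pdiff (i # is) G = foldr pdiff (i # js1 @ js2) G" by simp
  also have "\<dots> = foldr pdiff js G"
  proof -
    have "length (js1 @ i # js2) = length (i # is)"
      using mset_eq_length[OF Cons.prems(1)] js by simp
    hence "Ck (length (js1 @ i # js2)) G" using Cons.prems(2) by (simp only:)
    thus ?thesis unfolding js by (rule move_front[symmetric])
  qed
  finally show ?case .
qed

definition mlist :: "('n::finite \<Rightarrow> nat) \<Rightarrow> 'n list" where
  "mlist \<alpha> = concat (map (\<lambda>i. replicate (\<alpha> i) i) var_list)"

lemma var_list: "distinct (var_list :: 'n::finite list) \<and> set (var_list :: 'n list) = UNIV"
proof -
  obtain xs :: "'n list" where "set xs = UNIV \<and> distinct xs"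
    using finite_distinct_list[OF finite_class.finite_UNIV] by blast
  hence ex: "\<exists>xs::'n list. distinct xs \<and> set xs = UNIV" by blast
  have "distinct (SOME xs::'n list. distinct xs \<and> set xs = UNIV) \<and> set (SOME xs::'n list. distinct xs \<and> set xs = UNIV) = UNIV"
    by (rule someI_ex[OF ex])
  thus ?thesis by (simp add: var_list_def)
qed

lemma set_var_list[simp]: "set (var_list :: 'n::finite list) = UNIV"
  using var_list by blast

lemma distinct_var_list[simp]: "distinct (var_list :: 'n::finite list)"
  using var_list by blast

lemma funpow_foldr: "(pdiff i ^^ k) H = foldr pdiff (replicate k i) H"
  by (induction k) simp_all

lemma mderiv_mlist: "mderiv \<alpha> G = foldr pdiff (mlist \<alpha>) G"
proof -
  have "foldr (\<lambda>i G. (pdiff i ^^ (\<alpha> i)) G) xs G = foldr pdiff (concat (map (\<lambda>i. replicate (\<alpha> i) i) xs)) G" for xs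
  proof (induction xs)
    case (Cons a xs)
    have "foldr (\<lambda>i G. (pdiff i ^^ (\<alpha> i)) G) (a # xs) G = (pdiff a ^^ \<alpha> a) (foldr (\<lambda>i G. (pdiff i ^^ (\<alpha> i)) G) xs G)"
      by (simp only: foldr.simps o_apply)
    also have "\<dots> = foldr pdiff (replicate (\<alpha> a) a) (foldr pdiff (concat (map (\<lambda>i. replicate (\<alpha> i) i) xs)) G)"
      by (subst Cons.IH) (rule funpow_foldr)
    also have "\<dots> = foldr pdiff (concat (map (\<lambda>i. replicate (\<alpha> i) i) (a # xs))) G"
      by (simp only: foldr_append list.map concat.simps)
    finally show ?case .
  qed simp
  thus ?thesis by (simp add: mderiv_def mlist_def)
qed

lemma mset_concat_map: "mset (concat (map f xs)) = sum_list (map (\<lambda>x. mset (f x)) xs)"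
  by (induction xs) auto

lemma mset_mlist: "mset (mlist \<alpha>) = (\<Sum>i\<in>UNIV. replicate_mset (\<alpha> i) i)"
proof -
  have "mset (mlist \<alpha>) = sum_list (map (\<lambda>i. replicate_mset (\<alpha> i) i) var_list)"
    by (simp add: mlist_def mset_concat_map)
  also have "\<dots> = (\<Sum>i\<in>set var_list. replicate_mset (\<alpha> i) i)"
    by (rule sum_list_distinct_conv_sum_set) (use var_list in blast)
  finally show ?thesis by simp
qed

lemma length_mlist: "length (mlist \<alpha>) = mabs \<alpha>"
proof -
  have "length (mlist \<alpha>) = sum_list (map \<alpha> var_list)"
    by (simp add: mlist_def length_concat comp_def)
  also have "\<dots> = (\<Sum>i\<in>set var_list. \<alpha> i)"
    by (rule sum_list_distinct_conv_sum_set) (use var_list in blast)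
  finally show ?thesis by (simp add: mabs_def)
qed

lemma concat_nil_map: "concat (map (\<lambda>i. []) xs) = []"
  by (induction xs) auto

lemma mderiv_zero[simp]: "mderiv (\<lambda>_. 0) G = G"
  by (simp add: mderiv_mlist mlist_def concat_nil_map)

lemma rep_plus: "replicate_mset (a + b) x = replicate_mset a x + replicate_mset b x"
  by (induction a) auto

lemma Ck_mderiv: "mabs \<alpha> \<le> k \<Longrightarrow> Ck k G \<Longrightarrow> Ck (k - mabs \<alpha>) (mderiv \<alpha> G)"
  unfolding mderiv_mlist using Ck_appl[of "mlist \<alpha>" k G] by (simp add: length_mlist)

lemma mderiv_add:
  assumes "Ck (mabs \<gamma> + mabs \<delta>) G"
  shows "mderiv \<delta> (mderiv \<gamma> G) = mderiv (\<lambda>i. \<gamma> i + \<delta> i) G"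
proof -
  have "mderiv \<delta> (mderiv \<gamma> G) = foldr pdiff (mlist \<delta> @ mlist \<gamma>) G"
    by (simp add: mderiv_mlist)
  also have "\<dots> = foldr pdiff (mlist (\<lambda>i. \<gamma> i + \<delta> i)) G"
    using assms
    by (intro perm_apply) (auto simp: mset_mlist rep_plus sum.distrib length_mlist add.commute)
  finally show ?thesis by (simp add: mderiv_mlist)
qed

lemma mderiv_pdiff:
  assumes "Ck (Suc (mabs \<delta>)) G"
  shows "mderiv \<delta> (pdiff j G) = mderiv (\<delta>(j := \<delta> j + 1)) G"
proof -
  have "mderiv \<delta> (pdiff j G) = foldr pdiff (mlist \<delta> @ [j]) G"
    by (simp add: mderiv_mlist)
  also have "\<dots> = foldr pdiff (mlist (\<delta>(j := \<delta> j + 1))) G"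
  proof (rule perm_apply)
    have "(\<Sum>i\<in>UNIV. replicate_mset ((\<delta>(j := \<delta> j + 1)) i) i)
        = (\<Sum>i\<in>UNIV. replicate_mset (\<delta> i) i + (if i = j then {#j#} else {#}))"
      by (intro sum.cong) auto
    also have "\<dots> = (\<Sum>i\<in>UNIV. replicate_mset (\<delta> i) i) + {#j#}"
      by (simp add: sum.distrib)
    finally show "mset (mlist \<delta> @ [j]) = mset (mlist (\<delta>(j := \<delta> j + 1)))"
      by (simp add: mset_mlist)
    show "Ck (length (mlist \<delta> @ [j])) G" using assms by (simp add: length_mlist)
  qed
  finally show ?thesis by (simp add: mderiv_mlist)
qed

definition mbox :: "('n::finite \<Rightarrow> nat) \<Rightarrow> ('n \<Rightarrow> nat) set" where
  "mbox \<beta> = PiE UNIV (\<lambda>i. {..\<beta> i})"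

lemma mbox_iff: "\<gamma> \<in> mbox \<beta> \<longleftrightarrow> (\<forall>i. \<gamma> i \<le> \<beta> i)"
  by (simp add: mbox_def PiE_iff)

lemma finite_mbox: "finite (mbox \<beta>)"
  by (simp add: mbox_def finite_PiE)

lemma binom1: "(a + b :: real) ^ n / fact n = (\<Sum>k\<in>{..n}. a ^ k / fact k * (b ^ (n - k) / fact (n - k)))"
proof -
  have "(a + b) ^ n = (\<Sum>k\<le>n. of_nat (n choose k) * a ^ k * b ^ (n - k))"
    by (rule binomial_ring)
  hence "(a + b) ^ n / fact n = (\<Sum>k\<le>n. of_nat (n choose k) * a ^ k * b ^ (n - k) / fact n)"
    by (simp add: sum_divide_distrib)
  also have "\<dots> = (\<Sum>k\<in>{..n}. a ^ k / fact k * (b ^ (n - k) / fact (n - k)))"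
  proof (rule sum.cong)
    fix k assume "k \<in> {..n}"
    hence "real (n choose k) = fact n / (fact k * fact (n - k))" by (simp add: binomial_fact)
    thus "of_nat (n choose k) * a ^ k * b ^ (n - k) / fact n = a ^ k / fact k * (b ^ (n - k) / fact (n - k))"
      by (simp add: field_simps)
  qed simp
  finally show ?thesis .
qed

lemma mpow_div: "mpow x \<gamma> / mfact \<gamma> = (\<Prod>i\<in>UNIV. (x $ i) ^ (\<gamma> i) / fact (\<gamma> i))"
  by (simp add: mpow_def mfact_def prod_dividef)

lemma mbinom:
  "mpow (x + y) \<beta> / mfact \<beta> =
    (\<Sum>\<gamma>\<in>mbox \<beta>. (mpow x \<gamma> / mfact \<gamma>) * (mpow y (\<lambda>i. \<beta> i - \<gamma> i) / mfact (\<lambda>i. \<beta> i - \<gamma> i)))"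
proof -
  have "mpow (x + y) \<beta> / mfact \<beta> = (\<Prod>i\<in>UNIV. (x $ i + y $ i) ^ (\<beta> i) / fact (\<beta> i))"
    by (simp add: mpow_div)
  also have "\<dots> = (\<Prod>i\<in>UNIV. \<Sum>k\<in>{..\<beta> i}. (x $ i) ^ k / fact k * ((y $ i) ^ (\<beta> i - k) / fact (\<beta> i - k)))"
    by (simp add: binom1)
  also have "\<dots> = (\<Sum>g\<in>mbox \<beta>. \<Prod>i\<in>UNIV. (x $ i) ^ g i / fact (g i) * ((y $ i) ^ (\<beta> i - g i) / fact (\<beta> i - g i)))"
    unfolding mbox_def by (rule prod_sum_PiE) auto
  also have "\<dots> = (\<Sum>\<gamma>\<in>mbox \<beta>. (mpow x \<gamma> / mfact \<gamma>) * (mpow y (\<lambda>i. \<beta> i - \<gamma> i) / mfact (\<lambda>i. \<beta> i - \<gamma> i)))"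
    unfolding mpow_div by (intro sum.cong refl) (simp flip: prod.distrib)
  finally show ?thesis .
qed

lemma mabs_diff: "\<forall>i. \<gamma> i \<le> \<beta> i \<Longrightarrow> mabs (\<lambda>i. \<beta> i - \<gamma> i) = mabs \<beta> - mabs \<gamma>"
proof -
  assume a: "\<forall>i. \<gamma> i \<le> \<beta> i"
  have "(\<lambda>i. (\<beta> i - \<gamma> i) + \<gamma> i) = \<beta>" using a by (simp add: fun_eq_iff)
  hence "mabs (\<lambda>i. \<beta> i - \<gamma> i) + mabs \<gamma> = mabs \<beta>" using mabs_add[of "\<lambda>i. \<beta> i - \<gamma> i" \<gamma>] by simp
  thus ?thesis by simp
qed

lemma mbox_midx: "\<beta> \<in> midx p \<Longrightarrow> \<gamma> \<in> mbox \<beta> \<Longrightarrow> \<gamma> \<in> midx p"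
  using mabs_le[of \<gamma> \<beta>] by (auto simp: midx_def mbox_iff)

lemma sw_L1: "\<beta> \<in> midx p \<Longrightarrow> \<gamma> \<in> mbox \<beta> \<Longrightarrow> (\<lambda>i. \<beta> i - \<gamma> i) \<in> midx (p - mabs \<gamma>)"
  using mabs_diff[of \<gamma> \<beta>] by (auto simp: midx_def mbox_iff)

lemma sw_L2: "\<gamma> \<in> midx p \<Longrightarrow> \<delta> \<in> midx (p - mabs \<gamma>) \<Longrightarrow> (\<lambda>i. \<gamma> i + \<delta> i) \<in> midx p"
  by (auto simp: midx_def mabs_add)

lemma sw_L3: "\<gamma> \<in> mbox (\<lambda>i. \<gamma> i + \<delta> i)"
  by (auto simp: mbox_iff)

lemma sw_L4: "\<gamma> \<in> mbox \<beta> \<Longrightarrow> (\<lambda>i. \<gamma> i + (\<beta> i - \<gamma> i)) = \<beta>"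
  by (auto simp: mbox_iff fun_eq_iff)

lemma sum_swap_midx:
  "(\<Sum>\<beta>\<in>midx p. \<Sum>\<gamma>\<in>mbox \<beta>. g \<beta> \<gamma>) =
   (\<Sum>\<gamma>\<in>midx p. \<Sum>\<delta>\<in>midx (p - mabs \<gamma>). g (\<lambda>i. \<gamma> i + \<delta> i) \<gamma>)"
proof -
  have "(\<Sum>\<beta>\<in>midx p. \<Sum>\<gamma>\<in>mbox \<beta>. g \<beta> \<gamma>) = (\<Sum>(\<beta>,\<gamma>)\<in>Sigma (midx p) mbox. g \<beta> \<gamma>)"
    by (rule sum.Sigma) (auto simp: finite_midx finite_mbox)
  also have "\<dots> = (\<Sum>(\<gamma>,\<delta>)\<in>Sigma (midx p) (\<lambda>\<gamma>. midx (p - mabs \<gamma>)). g (\<lambda>i. \<gamma> i + \<delta> i) \<gamma>)"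
    apply (rule sum.reindex_bij_witness[where i = "\<lambda>(\<gamma>,\<delta>). (\<lambda>i. \<gamma> i + \<delta> i, \<gamma>)"
                                       and j = "\<lambda>(\<beta>,\<gamma>). (\<gamma>, \<lambda>i. \<beta> i - \<gamma> i)"])
    subgoal by (auto simp: mbox_iff fun_eq_iff)
    subgoal by (auto intro: sw_L1 mbox_midx)
    subgoal by auto
    subgoal by (auto intro: sw_L2 sw_L3)
    subgoal by (auto simp: sw_L4)
    done
  also have "\<dots> = (\<Sum>\<gamma>\<in>midx p. \<Sum>\<delta>\<in>midx (p - mabs \<gamma>). g (\<lambda>i. \<gamma> i + \<delta> i) \<gamma>)"
    by (rule sum.Sigma[symmetric]) (auto simp: finite_midx)
  finally show ?thesis .
qed

lemma shifted_in: "\<alpha> \<in> midx p \<Longrightarrow> (\<lambda>x. mpow (x - b) \<alpha> / mfact \<alpha>) \<in> polys p"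
proof -
  assume a: "\<alpha> \<in> midx p"
  have "(\<lambda>x. mpow (x - b) \<alpha> / mfact \<alpha>) =
     (\<lambda>x. \<Sum>\<gamma>\<in>mbox \<alpha>. (mpow (- b) (\<lambda>i. \<alpha> i - \<gamma> i) / mfact (\<lambda>i. \<alpha> i - \<gamma> i) / mfact \<gamma>) * mpow x \<gamma>)"
    using mbinom[of _ "- b" \<alpha>] by (simp add: fun_eq_iff mult.commute)
  also have "\<dots> \<in> polys p"
    using a by (intro polys_sum) (auto simp: finite_mbox mbox_midx mono_in)
  finally show ?thesis .
qed

lemma taylor_alt: "taylor p a F = (\<lambda>x. \<Sum>\<beta>\<in>midx p. mderiv \<beta> F a * (mpow (x - a) \<beta> / mfact \<beta>))"
  by (simp add: taylor_def fun_eq_iff)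

lemma taylor_in: "taylor p a F \<in> polys p"
  unfolding taylor_alt by (intro polys_sum) (auto simp: finite_midx shifted_in)

lemma taylor_at: fixes a :: "real^'n::finite" shows "taylor p a F a = F a"
proof -
  have "taylor p a F a = (\<Sum>\<beta>\<in>(midx p :: ('n \<Rightarrow> nat) set). if \<beta> = (\<lambda>_. 0) then F a else 0)"
    unfolding taylor_def by (rule sum.cong) (auto simp: mpow_0_vec)
  thus ?thesis by (simp add: finite_midx)
qed

lemma taylor_shift:
  "taylor p a F x = (\<Sum>\<gamma>\<in>midx p.
     (\<Sum>\<delta>\<in>midx (p - mabs \<gamma>). mderiv (\<lambda>i. \<gamma> i + \<delta> i) F a / mfact \<delta> * mpow (b - a) \<delta>) *
     (mpow (x - b) \<gamma> / mfact \<gamma>))"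
proof -
  have "taylor p a F x = (\<Sum>\<beta>\<in>midx p. mderiv \<beta> F a * (mpow ((x - b) + (b - a)) \<beta> / mfact \<beta>))"
    by (simp add: taylor_alt)
  also have "\<dots> = (\<Sum>\<beta>\<in>midx p. \<Sum>\<gamma>\<in>mbox \<beta>. mderiv \<beta> F a *
      ((mpow (x - b) \<gamma> / mfact \<gamma>) * (mpow (b - a) (\<lambda>i. \<beta> i - \<gamma> i) / mfact (\<lambda>i. \<beta> i - \<gamma> i))))"
    unfolding mbinom sum_distrib_left by (rule refl)
  also have "\<dots> = (\<Sum>\<gamma>\<in>midx p. \<Sum>\<delta>\<in>midx (p - mabs \<gamma>). mderiv (\<lambda>i. \<gamma> i + \<delta> i) F a *
      ((mpow (x - b) \<gamma> / mfact \<gamma>) * (mpow (b - a) \<delta> / mfact \<delta>)))"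
    by (subst sum_swap_midx) simp
  also have "\<dots> = (\<Sum>\<gamma>\<in>midx p.
     (\<Sum>\<delta>\<in>midx (p - mabs \<gamma>). mderiv (\<lambda>i. \<gamma> i + \<delta> i) F a / mfact \<delta> * mpow (b - a) \<delta>) *
     (mpow (x - b) \<gamma> / mfact \<gamma>))"
    unfolding sum_distrib_right by (intro sum.cong refl) (simp add: field_simps)
  finally show ?thesis .
qed



lemma axis_nth_if[simp]: "axis j (1::real) $ i = (if i = j then 1 else 0)"
  by (simp add: axis_def)

lemma axis_comp: "(c + s *\<^sub>R axis j (1::real) - a) $ i = c $ i - a $ i + (if i = j then s else 0)"
  by (simp add: axis_def)

lemma mpow_line_deriv:
  fixes c a :: "real^'n::finite"
  shows "((\<lambda>s. mpow (c + s *\<^sub>R axis j 1 - a) \<delta>) has_real_derivative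
          (of_nat (\<delta> j) * mpow (c + s0 *\<^sub>R axis j 1 - a) (\<delta>(j := \<delta> j - 1)))) (at s0)"
proof -
  define K where "K = (\<Prod>i\<in>UNIV - {j}. (c $ i - a $ i) ^ (\<delta> i))"
  have eq1: "mpow (c + s *\<^sub>R axis j 1 - a) \<delta> = (c $ j - a $ j + s) ^ (\<delta> j) * K" for s
  proof -
    have "mpow (c + s *\<^sub>R axis j 1 - a) \<delta> = (c + s *\<^sub>R axis j 1 - a) $ j ^ \<delta> j *
           (\<Prod>i\<in>UNIV - {j}. (c + s *\<^sub>R axis j 1 - a) $ i ^ \<delta> i)"
      unfolding mpow_def by (rule prod.remove) auto
    also have "(\<Prod>i\<in>UNIV - {j}. (c + s *\<^sub>R axis j 1 - a) $ i ^ \<delta> i) = K"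
      unfolding K_def by (rule prod.cong) (auto simp: axis_comp)
    finally show ?thesis by (simp add: algebra_simps)
  qed
  have eq2: "mpow (c + s0 *\<^sub>R axis j 1 - a) (\<delta>(j := \<delta> j - 1)) = (c $ j - a $ j + s0) ^ (\<delta> j - 1) * K"
  proof -
    let ?w = "c + s0 *\<^sub>R axis j 1 - a" and ?d = "\<delta>(j := \<delta> j - 1)"
    have "mpow ?w ?d = ?w $ j ^ ?d j * (\<Prod>i\<in>UNIV - {j}. ?w $ i ^ ?d i)"
      unfolding mpow_def by (rule prod.remove) auto
    also have "(\<Prod>i\<in>UNIV - {j}. ?w $ i ^ ?d i) = K"
      unfolding K_def by (rule prod.cong) (auto simp: axis_comp)
    also have "?w $ j ^ ?d j = (c $ j - a $ j + s0) ^ (\<delta> j - 1)"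
      by (simp add: axis_comp algebra_simps)
    finally show ?thesis .
  qed
  have "((\<lambda>s. (c $ j - a $ j + s) ^ (\<delta> j) * K) has_real_derivative
          (of_nat (\<delta> j) * ((c $ j - a $ j + s0) ^ (\<delta> j - 1) * K))) (at s0)"
    by (auto intro!: derivative_eq_intros simp: algebra_simps)
  thus ?thesis unfolding eq1 eq2 .
qed

lemma mabs_upd: "mabs (\<delta>(j := k)) + \<delta> j = mabs \<delta> + k"
proof -
  have "mabs (\<delta>(j := k)) = k + (\<Sum>i\<in>UNIV - {j}. \<delta> i)"
    unfolding mabs_def by (subst sum.remove[of UNIV j]) (auto intro!: sum.cong)
  moreover have "mabs \<delta> = \<delta> j + (\<Sum>i\<in>UNIV - {j}. \<delta> i)"
    unfolding mabs_def by (subst sum.remove[of UNIV j]) auto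
  ultimately show ?thesis by simp
qed

lemma mfact_upd: "mfact (\<delta>(j := \<delta> j + 1)) = real (\<delta> j + 1) * mfact \<delta>"
proof -
  have "mfact (\<delta>(j := \<delta> j + 1)) = fact (\<delta> j + 1) * (\<Prod>i\<in>UNIV - {j}. fact (\<delta> i))"
    unfolding mfact_def by (subst prod.remove[of UNIV j]) (auto intro!: prod.cong)
  moreover have "mfact \<delta> = fact (\<delta> j) * (\<Prod>i\<in>UNIV - {j}. fact (\<delta> i))"
    unfolding mfact_def by (subst prod.remove[of UNIV j]) auto
  ultimately show ?thesis by simp
qed

lemma cancel_r: "r \<noteq> 0 \<Longrightarrow> (M::real) / (r * F) * (r * P) = M / F * P"
  by (cases "F = 0") (simp_all add: field_simps)

lemma taylor_deriv_reindex:
  fixes a z :: "real^'n::finite"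
  assumes G: "Ck (Suc m) G"
  shows "(\<Sum>\<delta>\<in>midx (Suc m). mderiv \<delta> G a / mfact \<delta> * (of_nat (\<delta> j) * mpow z (\<delta>(j := \<delta> j - 1))))
       = taylor m a (pdiff j G) (z + a)"
proof -
  let ?f = "\<lambda>\<delta>. mderiv \<delta> G a / mfact \<delta> * (of_nat (\<delta> j) * mpow z (\<delta>(j := \<delta> j - 1)))"
  define S where "S = {\<delta> \<in> midx (Suc m). \<delta> j \<noteq> 0}"
  have "(\<Sum>\<delta>\<in>midx (Suc m). ?f \<delta>) = (\<Sum>\<delta>\<in>S. ?f \<delta>)"
    by (rule sum.mono_neutral_right) (auto simp: S_def finite_midx)
  also have "\<dots> = (\<Sum>\<delta>\<in>midx m. ?f (\<delta>(j := \<delta> j + 1)))"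
    apply (rule sum.reindex_bij_witness[where i = "\<lambda>\<delta>. \<delta>(j := \<delta> j + 1)" and j = "\<lambda>\<delta>. \<delta>(j := \<delta> j - 1)"])
    subgoal for d by (auto simp: S_def)
    subgoal for d using mabs_upd[of d j "d j - 1"] by (auto simp: S_def midx_def)
    subgoal for d by auto
    subgoal for d using mabs_upd[of d j "d j + 1"] by (auto simp: S_def midx_def)
    subgoal for d by (auto simp: S_def)
    done
  also have "\<dots> = (\<Sum>\<delta>\<in>midx m. mderiv \<delta> (pdiff j G) a / mfact \<delta> * mpow z \<delta>)"
  proof (rule sum.cong[OF refl])
    fix d :: "'n \<Rightarrow> nat" assume d: "d \<in> midx m"
    have "Ck (Suc (mabs d)) G" using d by (intro Ck_le[OF _ G]) (auto simp: midx_def)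
    hence D: "mderiv (d(j := d j + 1)) G = mderiv d (pdiff j G)" by (simp add: mderiv_pdiff)
    have u: "(d(j := d j + 1))(j := (d(j := d j + 1)) j - 1) = d" by simp
    have "?f (d(j := d j + 1)) = mderiv (d(j := d j + 1)) G a / mfact (d(j := d j + 1)) *
            (real (d j + 1) * mpow z d)"
      by (simp only: u) simp
    also have "\<dots> = mderiv d (pdiff j G) a / (real (d j + 1) * mfact d) * (real (d j + 1) * mpow z d)"
      by (simp only: D mfact_upd)
    also have "\<dots> = mderiv d (pdiff j G) a / mfact d * mpow z d"
      by (rule cancel_r) simp
    finally show "?f (d(j := d j + 1)) = mderiv d (pdiff j G) a / mfact d * mpow z d" .
  qed
  also have "\<dots> = taylor m a (pdiff j G) (z + a)" by (simp add: taylor_def)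
  finally show ?thesis .
qed

lemma midx_0: "midx 0 = {\<lambda>_. 0}"
  by (auto simp: midx_def mabs_def fun_eq_iff)

lemma taylor_0: "taylor 0 a G b = G a"
  by (simp add: taylor_def midx_0)

lemma finite_radius:
  fixes a0 :: "'a::metric_space"
  assumes "finite A"
    and "\<And>x. x \<in> A \<Longrightarrow> \<exists>r>0. \<forall>a b. dist a a0 < r \<longrightarrow> dist b a0 < r \<longrightarrow> Q x a b"
  shows "\<exists>r>0. \<forall>x\<in>A. \<forall>a b. dist a a0 < r \<longrightarrow> dist b a0 < r \<longrightarrow> Q x a b"
  using assms
proof (induction A rule: finite_induct)
  case empty
  show ?case by (rule exI[of _ 1]) simp
next
  case (insert y A)
  obtain r1 where r1: "r1 > 0" "\<forall>a b. dist a a0 < r1 \<longrightarrow> dist b a0 < r1 \<longrightarrow> Q y a b"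
    using insert.prems by blast
  obtain r2 where r2: "r2 > 0" "\<forall>x\<in>A. \<forall>a b. dist a a0 < r2 \<longrightarrow> dist b a0 < r2 \<longrightarrow> Q x a b"
    using insert.IH insert.prems by blast
  show ?case
    by (rule exI[of _ "min r1 r2"]) (use r1 r2 in auto)
qed

lemma mvt_abs:
  assumes d: "\<And>s. (\<phi> has_real_derivative \<phi>' s) (at s)"
  shows "\<exists>t. \<bar>t\<bar> \<le> \<bar>h\<bar> \<and> \<phi> h - \<phi> 0 = h * \<phi>' t"
proof (cases h "0::real" rule: linorder_cases)
  case less
  have "\<exists>z. h < z \<and> z < 0 \<and> \<phi> 0 - \<phi> h = (0 - h) * \<phi>' z"
    by (rule MVT2[OF less]) (rule d)
  then obtain z where "h < z" "z < 0" "\<phi> 0 - \<phi> h = (0 - h) * \<phi>' z" by blast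
  thus ?thesis by (intro exI[of _ z]) (auto simp: algebra_simps)
next
  case equal
  thus ?thesis by (intro exI[of _ 0]) simp
next
  case greater
  have "\<exists>z. 0 < z \<and> z < h \<and> \<phi> h - \<phi> 0 = (h - 0) * \<phi>' z"
    by (rule MVT2[OF greater]) (rule d)
  then obtain z where "0 < z" "z < h" "\<phi> h - \<phi> 0 = (h - 0) * \<phi>' z" by blast
  thus ?thesis by (intro exI[of _ z]) auto
qed

lemma taylor_line_deriv:
  fixes y a :: "real^'n::finite"
  assumes G: "Ck (Suc m) G"
  shows "((\<lambda>s. taylor (Suc m) a G (y + s *\<^sub>R axis j 1)) has_real_derivative
           taylor m a (pdiff j G) (y + s0 *\<^sub>R axis j 1)) (at s0)"
proof -
  have "((\<lambda>s. \<Sum>\<delta>\<in>midx (Suc m). mderiv \<delta> G a / mfact \<delta> * mpow (y + s *\<^sub>R axis j 1 - a) \<delta>) has_real_derivative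
     (\<Sum>\<delta>\<in>midx (Suc m). mderiv \<delta> G a / mfact \<delta> * (of_nat (\<delta> j) * mpow (y + s0 *\<^sub>R axis j 1 - a) (\<delta>(j := \<delta> j - 1))))) (at s0)"
    by (intro DERIV_sum DERIV_cmult mpow_line_deriv)
  also have "(\<Sum>\<delta>\<in>midx (Suc m). mderiv \<delta> G a / mfact \<delta> * (of_nat (\<delta> j) * mpow (y + s0 *\<^sub>R axis j 1 - a) (\<delta>(j := \<delta> j - 1))))
     = taylor m a (pdiff j G) ((y + s0 *\<^sub>R axis j 1 - a) + a)"
    by (rule taylor_deriv_reindex[OF G])
  finally show ?thesis by (simp add: taylor_def)
qed

lemma taylor_est:
  fixes G :: "real^'n::finite \<Rightarrow> real" and a0 :: "real^'n"
  shows "Ck m G \<Longrightarrow> \<epsilon> > 0 \<Longrightarrow> \<exists>r>0. \<forall>a b. dist a a0 < r \<longrightarrow> dist b a0 < r \<longrightarrow>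
            \<bar>G b - taylor m a G b\<bar> \<le> \<epsilon> * norm (b - a) ^ m"
proof (induction m arbitrary: G \<epsilon>)
  case 0
  have "continuous (at a0) G" using Ck_cont[OF "0.prems"(1)] by (simp add: continuous_on_eq_continuous_at)
  then obtain d where d: "d > 0" "\<forall>y. dist y a0 < d \<longrightarrow> dist (G y) (G a0) < \<epsilon> / 2"
    using "0.prems"(2) unfolding continuous_at_eps_delta by (metis half_gt_zero)
  show ?case
  proof (intro exI[of _ d] conjI allI impI)
    fix a b assume "dist a a0 < d" "dist b a0 < d"
    hence "\<bar>G a - G a0\<bar> < \<epsilon> / 2" "\<bar>G b - G a0\<bar> < \<epsilon> / 2" using d by (auto simp: dist_real_def)
    thus "\<bar>G b - taylor 0 a G b\<bar> \<le> \<epsilon> * norm (b - a) ^ 0" by (simp add: taylor_0) (smt (verit))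
  qed (rule d)
next
  case (Suc m)
  define \<epsilon>' where "\<epsilon>' = \<epsilon> / real CARD('n)"
  have e': "\<epsilon>' > 0" using Suc.prems by (simp add: \<epsilon>'_def)
  have G: "Ck (Suc m) G" by (rule Suc.prems(1))
  have "\<exists>r>0. \<forall>a b. dist a a0 < r \<longrightarrow> dist b a0 < r \<longrightarrow>
            \<bar>pdiff j G b - taylor m a (pdiff j G) b\<bar> \<le> \<epsilon>' * norm (b - a) ^ m" for j
    using G e' by (intro Suc.IH) auto
  hence "\<exists>r>0. \<forall>j\<in>(UNIV::'n set). \<forall>a b. dist a a0 < r \<longrightarrow> dist b a0 < r \<longrightarrow>
            \<bar>pdiff j G b - taylor m a (pdiff j G) b\<bar> \<le> \<epsilon>' * norm (b - a) ^ m"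
    by (intro finite_radius[OF finite_class.finite_UNIV])
  then obtain r where r: "r > 0" "\<forall>j\<in>UNIV. \<forall>a b. dist a a0 < r \<longrightarrow> dist b a0 < r \<longrightarrow>
            \<bar>pdiff j G b - taylor m a (pdiff j G) b\<bar> \<le> \<epsilon>' * norm (b - a) ^ m"
    by blast
  show ?case
  proof (intro exI[of _ "r / 3"] conjI allI impI)
    show "r / 3 > 0" using r by simp
    fix a b :: "real^'n" assume a: "dist a a0 < r / 3" and b: "dist b a0 < r / 3"
    let ?N = "norm (b - a)"
    have N: "?N < 2 * r / 3"
    proof -
      have "?N \<le> dist b a0 + dist a a0" by (metis dist_norm dist_triangle2 dist_commute)
      thus ?thesis using a b by simp
    qed
    define R where "R = (\<lambda>x. G x - taylor (Suc m) a G x)"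
    define c where "c = (\<lambda>S. (\<chi> i. if i \<in> S then b $ i else a $ i) :: real^'n)"
    have claim: "\<bar>R (c S)\<bar> \<le> real (card S) * \<epsilon>' * ?N ^ Suc m" if "finite S" for S
      using that
    proof (induction S rule: finite_induct)
      case empty
      have "c {} = a" by (simp add: c_def vec_eq_iff)
      thus ?case by (simp add: R_def taylor_at)
    next
      case (insert j S)
      let ?u = "axis j (1::real)" and ?h = "b $ j - a $ j"
      have cS: "c (insert j S) = c S + ?h *\<^sub>R ?u"
        using insert.hyps by (auto simp: c_def vec_eq_iff)
      define \<phi> where "\<phi> = (\<lambda>s. R (c S + s *\<^sub>R ?u))"
      define \<phi>' where "\<phi>' = (\<lambda>s. pdiff j G (c S + s *\<^sub>R ?u) - taylor m a (pdiff j G) (c S + s *\<^sub>R ?u))"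
      have der: "(\<phi> has_real_derivative \<phi>' s) (at s)" for s
        unfolding \<phi>_def \<phi>'_def R_def
        by (intro DERIV_diff line_deriv[OF G] taylor_line_deriv[OF G])
      obtain t where t: "\<bar>t\<bar> \<le> \<bar>?h\<bar>" "\<phi> ?h - \<phi> 0 = ?h * \<phi>' t"
        using mvt_abs[OF der] by blast
      define y where "y = c S + t *\<^sub>R ?u"
      have comp: "norm ((y - a) $ i) \<le> norm ((b - a) $ i)" for i
        using t(1) insert.hyps by (auto simp: y_def c_def)
      have ny: "norm (y - a) \<le> ?N" by (rule norm_le_componentwise_cart) (rule comp)
      have "dist y a0 \<le> norm (y - a) + dist a a0" by (metis dist_norm dist_triangle)
      hence ya0: "dist y a0 < r" using ny N a by simp
      have aa0: "dist a a0 < r" using a r by simp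
      have "\<bar>\<phi>' t\<bar> \<le> \<epsilon>' * norm (y - a) ^ m"
        using r(2) ya0 aa0 by (simp add: \<phi>'_def y_def)
      also have "\<dots> \<le> \<epsilon>' * ?N ^ m"
        using e' ny by (intro mult_left_mono power_mono) auto
      finally have pt: "\<bar>\<phi>' t\<bar> \<le> \<epsilon>' * ?N ^ m" .
      have hN: "\<bar>?h\<bar> \<le> ?N" using component_le_norm_cart[of "b - a" j] by simp
      have "\<bar>?h * \<phi>' t\<bar> \<le> ?N * (\<epsilon>' * ?N ^ m)"
        unfolding abs_mult by (intro mult_mono hN pt) auto
      hence "\<bar>\<phi> ?h - \<phi> 0\<bar> \<le> \<epsilon>' * ?N ^ Suc m" using t(2) by (simp add: algebra_simps)
      moreover have "\<phi> 0 = R (c S)" by (simp add: \<phi>_def)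
      moreover have "\<phi> ?h = R (c (insert j S))" by (simp add: \<phi>_def cS)
      ultimately have "\<bar>R (c (insert j S))\<bar> \<le> \<bar>R (c S)\<bar> + \<epsilon>' * ?N ^ Suc m" by linarith
      also have "\<dots> \<le> real (card S) * \<epsilon>' * ?N ^ Suc m + \<epsilon>' * ?N ^ Suc m"
        using insert.IH by simp
      also have "\<dots> = real (card (insert j S)) * \<epsilon>' * ?N ^ Suc m"
        using insert.hyps by (simp add: algebra_simps)
      finally show ?case .
    qed
    have "c UNIV = b" by (simp add: c_def vec_eq_iff)
    hence "\<bar>R b\<bar> \<le> real CARD('n) * \<epsilon>' * ?N ^ Suc m" using claim[of UNIV] by simp
    also have "real CARD('n) * \<epsilon>' = \<epsilon>" by (simp add: \<epsilon>'_def)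
    finally show "\<bar>G b - taylor (Suc m) a G b\<bar> \<le> \<epsilon> * ?N ^ Suc m" by (simp add: R_def)
  qed
qed

definition Psi :: "nat \<Rightarrow> ((real^'n::finite) \<Rightarrow> real) \<Rightarrow> real^'n \<Rightarrow> (('n \<Rightarrow> nat) \<Rightarrow> real) \<Rightarrow> real" where
  "Psi p F a c = (\<Sum>\<beta>\<in>midx p. mderiv \<beta> F a *
      (\<Sum>\<gamma>\<in>mbox \<beta>. (mpow (- a) (\<lambda>i. \<beta> i - \<gamma> i) / mfact (\<lambda>i. \<beta> i - \<gamma> i) / mfact \<gamma>) * c \<gamma>))"

lemma shifted_expand:
  "(\<lambda>x. mpow (x - b) \<alpha> / mfact \<alpha>) =
     (\<lambda>x. \<Sum>\<gamma>\<in>mbox \<alpha>. (mpow (- b) (\<lambda>i. \<alpha> i - \<gamma> i) / mfact (\<lambda>i. \<alpha> i - \<gamma> i) / mfact \<gamma>) * mpow x \<gamma>)"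
  using mbinom[of _ "- b" \<alpha>] by (simp add: fun_eq_iff mult.commute)

lemma dual_shifted:
  assumes "\<xi> \<in> dual p" "\<beta> \<in> midx p"
  shows "\<xi> (\<lambda>x. mpow (x - a) \<beta> / mfact \<beta>) =
    (\<Sum>\<gamma>\<in>mbox \<beta>. (mpow (- a) (\<lambda>i. \<beta> i - \<gamma> i) / mfact (\<lambda>i. \<beta> i - \<gamma> i) / mfact \<gamma>) * coord p \<xi> \<gamma>)"
  unfolding shifted_expand
  using assms by (subst dual_sum) (auto simp: finite_mbox mbox_midx mono_in coord_def)

lemma psi_eq: "\<xi> \<in> dual p \<Longrightarrow> \<xi> (taylor p a F) = Psi p F a (coord p \<xi>)"
  unfolding taylor_alt Psi_def
  by (subst dual_sum) (auto simp: finite_midx shifted_in dual_shifted)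

lemma xi_taylor_b: "\<xi> \<in> dual p \<Longrightarrow> \<xi> (taylor p b F) = (\<Sum>\<gamma>\<in>midx p. mderiv \<gamma> F b * xi_alpha \<xi> \<gamma> b)"
  unfolding taylor_alt xi_alpha_def
  by (subst dual_sum) (auto simp: finite_midx shifted_in)

lemma xi_taylor_ab:
  fixes F :: "real^'n::finite \<Rightarrow> real"
  assumes "\<xi> \<in> dual p" "Ck p F"
  shows "\<xi> (taylor p a F) = (\<Sum>\<gamma>\<in>midx p. taylor (p - mabs \<gamma>) a (mderiv \<gamma> F) b * xi_alpha \<xi> \<gamma> b)"
proof -
  have C: "(\<Sum>\<delta>\<in>midx (p - mabs \<gamma>). mderiv (\<lambda>i. \<gamma> i + \<delta> i) F a / mfact \<delta> * mpow (b - a) \<delta>)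
        = taylor (p - mabs \<gamma>) a (mderiv \<gamma> F) b" if g: "\<gamma> \<in> midx p" for \<gamma>
    unfolding taylor_def
  proof (rule sum.cong[OF refl])
    fix \<delta> :: "'n \<Rightarrow> nat" assume d: "\<delta> \<in> midx (p - mabs \<gamma>)"
    have "Ck (mabs \<gamma> + mabs \<delta>) F" using g d by (intro Ck_le[OF _ assms(2)]) (auto simp: midx_def)
    thus "mderiv (\<lambda>i. \<gamma> i + \<delta> i) F a / mfact \<delta> * mpow (b - a) \<delta> =
          mderiv \<delta> (mderiv \<gamma> F) a / mfact \<delta> * mpow (b - a) \<delta>" by (simp add: mderiv_add)
  qed
  have "taylor p a F = (\<lambda>x. \<Sum>\<gamma>\<in>midx p.
     (\<Sum>\<delta>\<in>midx (p - mabs \<gamma>). mderiv (\<lambda>i. \<gamma> i + \<delta> i) F a / mfact \<delta> * mpow (b - a) \<delta>) *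
     (mpow (x - b) \<gamma> / mfact \<gamma>))"
    by (rule ext) (rule taylor_shift)
  also have "\<dots> = (\<lambda>x. \<Sum>\<gamma>\<in>midx p. taylor (p - mabs \<gamma>) a (mderiv \<gamma> F) b * (mpow (x - b) \<gamma> / mfact \<gamma>))"
    apply (intro ext sum.cong refl)
    subgoal for x \<gamma> using C[of \<gamma>] by simp
    done
  finally have eq: "taylor p a F = (\<lambda>x. \<Sum>\<gamma>\<in>midx p. taylor (p - mabs \<gamma>) a (mderiv \<gamma> F) b * (mpow (x - b) \<gamma> / mfact \<gamma>))" .
  show ?thesis
    unfolding eq xi_alpha_def
    by (rule dual_sum[OF assms(1) finite_midx, where P = "\<lambda>\<gamma> x. mpow (x - b) \<gamma> / mfact \<gamma>" and c = "\<lambda>\<gamma>. taylor (p - mabs \<gamma>) a (mderiv \<gamma> F) b"])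
       (auto simp: shifted_in)
qed

lemma est:
  fixes F :: "real^'n::finite \<Rightarrow> real" and a0 :: "real^'n"
  assumes F: "Ck p F" and e: "\<epsilon> > 0"
  shows "\<exists>r>0. \<forall>a b. dist a a0 < r \<longrightarrow> dist b a0 < r \<longrightarrow> (\<forall>\<eta>. \<eta> \<in> dual p \<longrightarrow>
     (\<forall>\<alpha>\<in>midx p. norm (a - b) ^ (p - mabs \<alpha>) * \<bar>xi_alpha \<eta> \<alpha> b\<bar> \<le> 1) \<longrightarrow>
     \<bar>\<eta> (taylor p b F) - \<eta> (taylor p a F)\<bar> \<le> \<epsilon>)"
proof -
  define K where "K = card (midx p :: ('n \<Rightarrow> nat) set)"
  have K: "K > 0" unfolding K_def using finite_midx zero_midx by (metis card_gt_0_iff empty_iff)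
  define e' where "e' = \<epsilon> / real K"
  have e': "e' > 0" using e K by (simp add: e'_def)
  have "\<exists>r>0. \<forall>a b. dist a a0 < r \<longrightarrow> dist b a0 < r \<longrightarrow>
     \<bar>mderiv \<gamma> F b - taylor (p - mabs \<gamma>) a (mderiv \<gamma> F) b\<bar> \<le> e' * norm (b - a) ^ (p - mabs \<gamma>)"
    if "\<gamma> \<in> midx p" for \<gamma>
    using that F e' by (intro taylor_est Ck_mderiv) (auto simp: midx_def)
  hence "\<exists>r>0. \<forall>\<gamma>\<in>midx p. \<forall>a b. dist a a0 < r \<longrightarrow> dist b a0 < r \<longrightarrow>
     \<bar>mderiv \<gamma> F b - taylor (p - mabs \<gamma>) a (mderiv \<gamma> F) b\<bar> \<le> e' * norm (b - a) ^ (p - mabs \<gamma>)"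
    by (intro finite_radius[OF finite_midx])
  then obtain r where r: "r > 0" "\<forall>\<gamma>\<in>midx p. \<forall>a b. dist a a0 < r \<longrightarrow> dist b a0 < r \<longrightarrow>
     \<bar>mderiv \<gamma> F b - taylor (p - mabs \<gamma>) a (mderiv \<gamma> F) b\<bar> \<le> e' * norm (b - a) ^ (p - mabs \<gamma>)"
    by blast
  show ?thesis
  proof (intro exI[of _ r] conjI allI impI)
    fix a b :: "real^'n" and \<eta>
    assume a: "dist a a0 < r" and b: "dist b a0 < r" and \<eta>: "\<eta> \<in> dual p"
      and c: "\<forall>\<alpha>\<in>midx p. norm (a - b) ^ (p - mabs \<alpha>) * \<bar>xi_alpha \<eta> \<alpha> b\<bar> \<le> 1"
    have "\<eta> (taylor p b F) - \<eta> (taylor p a F) =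
       (\<Sum>\<gamma>\<in>midx p. (mderiv \<gamma> F b - taylor (p - mabs \<gamma>) a (mderiv \<gamma> F) b) * xi_alpha \<eta> \<gamma> b)"
      unfolding xi_taylor_b[OF \<eta>, of b F] xi_taylor_ab[OF \<eta> F, of a b]
      by (simp add: sum_subtractf left_diff_distrib)
    also have "\<bar>\<dots>\<bar> \<le> (\<Sum>\<gamma>\<in>midx p. \<bar>(mderiv \<gamma> F b - taylor (p - mabs \<gamma>) a (mderiv \<gamma> F) b) * xi_alpha \<eta> \<gamma> b\<bar>)"
      by (rule sum_abs)
    also have "\<dots> \<le> (\<Sum>\<gamma>\<in>(midx p :: ('n \<Rightarrow> nat) set). e')"
    proof (rule sum_mono)
      fix \<gamma> :: "'n \<Rightarrow> nat" assume g: "\<gamma> \<in> midx p"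
      have "\<bar>(mderiv \<gamma> F b - taylor (p - mabs \<gamma>) a (mderiv \<gamma> F) b) * xi_alpha \<eta> \<gamma> b\<bar>
          \<le> (e' * norm (b - a) ^ (p - mabs \<gamma>)) * \<bar>xi_alpha \<eta> \<gamma> b\<bar>"
        unfolding abs_mult using r(2) g a b by (intro mult_right_mono) auto
      also have "\<dots> = e' * (norm (a - b) ^ (p - mabs \<gamma>) * \<bar>xi_alpha \<eta> \<gamma> b\<bar>)"
        by (simp add: norm_minus_commute)
      also have "\<dots> \<le> e' * 1" using c g e' by (intro mult_left_mono) auto
      finally show "\<bar>(mderiv \<gamma> F b - taylor (p - mabs \<gamma>) a (mderiv \<gamma> F) b) * xi_alpha \<eta> \<gamma> b\<bar> \<le> e'" by simp
    qed
    also have "\<dots> = \<epsilon>" using K by (simp add: e'_def K_def)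
    finally show "\<bar>\<eta> (taylor p b F) - \<eta> (taylor p a F)\<bar> \<le> \<epsilon>" .
  qed (rule r)
qed

lemma closure_ne_bot: "x \<in> closure S \<Longrightarrow> inf (nhds x) (principal S) \<noteq> bot"
proof
  assume x: "x \<in> closure S" and b: "inf (nhds x) (principal S) = bot"
  have "eventually (\<lambda>y. False) (inf (nhds x) (principal S))" using b by simp
  hence "eventually (\<lambda>y. y \<in> S \<longrightarrow> False) (nhds x)" by (simp only: eventually_inf_principal)
  then obtain U where U: "open U" "x \<in> U" "\<forall>y\<in>U. y \<notin> S" unfolding eventually_nhds by blast
  hence "U \<inter> S = {}" by blast
  hence "U \<inter> closure S = {}" using U(1) open_Int_closure_eq_empty by blast
  thus False using x U(2) by blast
qed

lemma coord_app_tendsto: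
  fixes C :: "'z \<Rightarrow> ('b \<Rightarrow> real)"
  shows "(C \<longlongrightarrow> c0) Fl \<Longrightarrow> ((\<lambda>z. C z \<gamma>) \<longlongrightarrow> c0 \<gamma>) Fl"
  by (rule continuous_on_tendsto_compose[OF continuous_on_product_coordinates]) auto

lemma mpow_tendsto: "(A \<longlongrightarrow> a0) Fl \<Longrightarrow> ((\<lambda>z. mpow (A z) \<delta>) \<longlongrightarrow> mpow a0 \<delta>) Fl"
  unfolding mpow_def by (intro tendsto_intros)

lemma psi_tendsto:
  fixes F :: "real^'n::finite \<Rightarrow> real"
  assumes F: "Ck p F" and A: "(A \<longlongrightarrow> a0) Fl" and C: "(C \<longlongrightarrow> c0) Fl"
  shows "((\<lambda>z. Psi p F (A z) (C z)) \<longlongrightarrow> Psi p F a0 c0) Fl"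
  unfolding Psi_def
proof (intro tendsto_sum tendsto_mult tendsto_divide tendsto_const mpow_tendsto tendsto_minus A
         coord_app_tendsto[OF C])
  fix \<beta> :: "'n \<Rightarrow> nat" assume b: "\<beta> \<in> midx p"
  have "Ck (p - mabs \<beta>) (mderiv \<beta> F)" using b F by (intro Ck_mderiv) (auto simp: midx_def)
  hence "continuous_on UNIV (mderiv \<beta> F)" by (rule Ck_cont)
  hence "isCont (mderiv \<beta> F) a0" by (simp add: continuous_on_eq_continuous_at)
  thus "((\<lambda>z. mderiv \<beta> F (A z)) \<longlongrightarrow> mderiv \<beta> F a0) Fl" using A by (rule isCont_tendsto_compose)
qed simp_all

definition GR :: "nat \<Rightarrow> (real^'n::finite) set \<Rightarrow> ((real^'n) \<Rightarrow> real)
     \<Rightarrow> ((real^'n) \<times> (((real^'n) \<Rightarrow> real) \<Rightarrow> real) \<times> real) set" where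
  "GR p X F = {(a, \<xi>, l). a \<in> X \<and> \<xi> \<in> dual p \<and> l = \<xi> (taylor p a F)}"

lemma SP_elim:
  assumes "z \<in> (\<lambda>(a, b, \<eta>, m). (a, b, coord p \<eta>, m)) ` Delta_Phi p X \<Phi>"
  obtains a b \<xi> l \<eta> m where "z = (a, b, coord p (\<lambda>P. \<xi> P + \<eta> P), l + m)" "a \<in> X" "b \<in> X"
    "(a, \<xi>, l) \<in> \<Phi>" "(b, \<eta>, m) \<in> \<Phi>"
    "\<forall>\<alpha>\<in>midx p. norm (a - b) ^ (p - mabs \<alpha>) * \<bar>xi_alpha \<eta> \<alpha> b\<bar> \<le> 1"
  using assms unfolding Delta_Phi_def by auto

lemma ev_dist:
  assumes "(A \<longlongrightarrow> a0) Fl" "r > 0"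
  shows "eventually (\<lambda>z. dist (A z) a0 < r) Fl"
  using assms tendsto_iff by blast

lemma phiprime_sub:
  fixes F :: "real^'n::finite \<Rightarrow> real"
  assumes F: "Ck p F" and sub: "\<Phi> \<subseteq> GR p X F"
  shows "Phiprime p X \<Phi> \<subseteq> GR p X F"
proof
  fix w assume "w \<in> Phiprime p X \<Phi>"
  then obtain a0 \<xi>0 l0 where w: "w = (a0, \<xi>0, l0)" "a0 \<in> X" "\<xi>0 \<in> dual p"
    and cl: "(a0, a0, coord p \<xi>0, l0) \<in> closure ((\<lambda>(a, b, \<eta>, m). (a, b, coord p \<eta>, m)) ` Delta_Phi p X \<Phi>)"
    unfolding Phiprime_def by blast
  define SP where "SP = (\<lambda>(a, b, \<eta>, m). (a, b, coord p \<eta>, m)) ` Delta_Phi p X \<Phi>"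
  define z0 where "z0 = (a0, a0, coord p \<xi>0, l0)"
  define FF where "FF = inf (nhds z0) (principal SP)"
  have ne: "FF \<noteq> bot" using cl closure_ne_bot unfolding FF_def SP_def z0_def by blast
  have id: "((\<lambda>z. z) \<longlongrightarrow> z0) FF"
    unfolding FF_def by (rule tendsto_mono[OF inf_le1]) (rule filterlim_ident)
  define g where "g = (\<lambda>z::(real^'n) \<times> (real^'n) \<times> (('n \<Rightarrow> nat) \<Rightarrow> real) \<times> real.
      snd (snd (snd z)) - Psi p F (fst z) (fst (snd (snd z))))"
  have lim1: "(g \<longlongrightarrow> l0 - Psi p F a0 (coord p \<xi>0)) FF"
    unfolding g_def
    using psi_tendsto[OF F tendsto_fst[OF id] tendsto_fst[OF tendsto_snd[OF tendsto_snd[OF id]]]]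
      tendsto_snd[OF tendsto_snd[OF tendsto_snd[OF id]]]
    by (simp add: z0_def tendsto_diff)
  have lim2: "(g \<longlongrightarrow> 0) FF"
  proof (rule tendstoI)
    fix e :: real assume e: "e > 0"
    obtain r where r: "r > 0" "\<forall>a b. dist a a0 < r \<longrightarrow> dist b a0 < r \<longrightarrow> (\<forall>\<eta>. \<eta> \<in> dual p \<longrightarrow>
       (\<forall>\<alpha>\<in>midx p. norm (a - b) ^ (p - mabs \<alpha>) * \<bar>xi_alpha \<eta> \<alpha> b\<bar> \<le> 1) \<longrightarrow>
       \<bar>\<eta> (taylor p b F) - \<eta> (taylor p a F)\<bar> \<le> e / 2)"
      using est[OF F, of "e / 2" a0] e by auto
    have ev1: "eventually (\<lambda>z. dist (fst z) a0 < r) FF"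
      using ev_dist[OF tendsto_fst[OF id] r(1)] by (simp add: z0_def)
    have ev2: "eventually (\<lambda>z. dist (fst (snd z)) a0 < r) FF"
      using ev_dist[OF tendsto_fst[OF tendsto_snd[OF id]] r(1)] by (simp add: z0_def)
    have ev3: "eventually (\<lambda>z. z \<in> SP) FF"
      unfolding FF_def eventually_inf_principal by simp
    show "eventually (\<lambda>z. dist (g z) 0 < e) FF"
      using ev1 ev2 ev3
    proof eventually_elim
      case (elim z)
      from elim(3) obtain a b \<xi> l \<eta> m where z: "z = (a, b, coord p (\<lambda>P. \<xi> P + \<eta> P), l + m)"
        "a \<in> X" "b \<in> X" "(a, \<xi>, l) \<in> \<Phi>" "(b, \<eta>, m) \<in> \<Phi>"
        "\<forall>\<alpha>\<in>midx p. norm (a - b) ^ (p - mabs \<alpha>) * \<bar>xi_alpha \<eta> \<alpha> b\<bar> \<le> 1"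
        unfolding SP_def by (rule SP_elim)
      have xi: "\<xi> \<in> dual p" "l = \<xi> (taylor p a F)" using z(4) sub by (auto simp: GR_def)
      have eta: "\<eta> \<in> dual p" "m = \<eta> (taylor p b F)" using z(5) sub by (auto simp: GR_def)
      have "Psi p F a (coord p (\<lambda>P. \<xi> P + \<eta> P)) = \<xi> (taylor p a F) + \<eta> (taylor p a F)"
        using psi_eq[OF dual_add[OF xi(1) eta(1)]] by simp
      hence "g z = \<eta> (taylor p b F) - \<eta> (taylor p a F)"
        using xi eta by (simp add: g_def z(1))
      moreover have "\<bar>\<eta> (taylor p b F) - \<eta> (taylor p a F)\<bar> \<le> e / 2"
        using r(2) elim(1,2) eta(1) z(6) by (simp add: z(1))
      ultimately show ?case using e by simp
    qed
  qed
  have "l0 - Psi p F a0 (coord p \<xi>0) = 0" using tendsto_unique[OF ne lim1 lim2] .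
  hence "l0 = \<xi>0 (taylor p a0 F)" using psi_eq[OF w(3)] by simp
  thus "w \<in> GR p X F" using w by (simp add: GR_def)
qed

lemma eprime_lift:
  fixes F :: "real^'n::finite \<Rightarrow> real"
  assumes F: "Ck p F"
    and LE: "\<forall>a \<xi>. (a, \<xi>) \<in> E \<longrightarrow> a \<in> X \<and> \<xi> \<in> dual p \<and> (a, \<xi>, \<xi> (taylor p a F)) \<in> \<Phi>"
    and w: "(a0, \<eta>0) \<in> Eprime p X E"
  shows "(a0, \<eta>0, \<eta>0 (taylor p a0 F)) \<in> Phiprime p X \<Phi>"
proof -
  from w have a0: "a0 \<in> X" and e0: "\<eta>0 \<in> dual p"
    and cl: "(a0, a0, coord p \<eta>0) \<in> closure ((\<lambda>(a, b, \<eta>). (a, b, coord p \<eta>)) ` Delta_E p X E)"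
    unfolding Eprime_def by auto
  define SE where "SE = (\<lambda>(a, b, \<eta>). (a, b, coord p \<eta>)) ` Delta_E p X E"
  define SP where "SP = (\<lambda>(a, b, \<eta>, m). (a, b, coord p \<eta>, m)) ` Delta_Phi p X \<Phi>"
  define Lift where "Lift = (\<lambda>x w. \<exists>a b \<xi> \<eta>. (a, \<xi>) \<in> E \<and> (b, \<eta>) \<in> E \<and> a \<in> X \<and> b \<in> X \<and>
      (\<forall>\<alpha>\<in>midx p. norm (a - b) ^ (p - mabs \<alpha>) * \<bar>xi_alpha \<eta> \<alpha> b\<bar> \<le> 1) \<and>
      x = (a, b, coord p (\<lambda>P. \<xi> P + \<eta> P)) \<and>
      w = (a, b, coord p (\<lambda>P. \<xi> P + \<eta> P), \<xi> (taylor p a F) + \<eta> (taylor p b F)))"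
  have exL: "\<exists>w. Lift x w" if "x \<in> SE" for x
  proof -
    from that obtain a b \<xi> \<eta> where h: "a \<in> X" "b \<in> X" "(a, \<xi>) \<in> E" "(b, \<eta>) \<in> E"
      "\<forall>\<alpha>\<in>midx p. norm (a - b) ^ (p - mabs \<alpha>) * \<bar>xi_alpha \<eta> \<alpha> b\<bar> \<le> 1"
      "x = (a, b, coord p (\<lambda>P. \<xi> P + \<eta> P))"
      unfolding SE_def Delta_E_def by auto
    show ?thesis unfolding Lift_def
      by (rule exI[of _ "(a, b, coord p (\<lambda>P. \<xi> P + \<eta> P), \<xi> (taylor p a F) + \<eta> (taylor p b F))"])
         (use h in blast)
  qed
  define L where "L = (\<lambda>x. SOME w. Lift x w)"
  have LL: "Lift x (L x)" if "x \<in> SE" for x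
    unfolding L_def using exL[OF that] by (rule someI_ex)
  have LSP: "L x \<in> SP" if "x \<in> SE" for x
  proof -
    from LL[OF that] obtain a b \<xi> \<eta> where h: "(a, \<xi>) \<in> E" "(b, \<eta>) \<in> E" "a \<in> X" "b \<in> X"
      "\<forall>\<alpha>\<in>midx p. norm (a - b) ^ (p - mabs \<alpha>) * \<bar>xi_alpha \<eta> \<alpha> b\<bar> \<le> 1"
      "L x = (a, b, coord p (\<lambda>P. \<xi> P + \<eta> P), \<xi> (taylor p a F) + \<eta> (taylor p b F))"
      unfolding Lift_def by blast
    have "(a, b, (\<lambda>P. \<xi> P + \<eta> P), \<xi> (taylor p a F) + \<eta> (taylor p b F)) \<in> Delta_Phi p X \<Phi>"
      unfolding Delta_Phi_def using h LE by blast
    thus ?thesis unfolding SP_def h(6) by (rule rev_image_eqI) simp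
  qed
  define err where "err = (\<lambda>x. snd (snd (snd (L x))) - Psi p F (fst x) (snd (snd x)))"
  have Lform: "L x = (fst x, fst (snd x), snd (snd x), Psi p F (fst x) (snd (snd x)) + err x)" if "x \<in> SE" for x
  proof -
    from LL[OF that] obtain a b \<xi> \<eta> where h:
      "x = (a, b, coord p (\<lambda>P. \<xi> P + \<eta> P))"
      "L x = (a, b, coord p (\<lambda>P. \<xi> P + \<eta> P), \<xi> (taylor p a F) + \<eta> (taylor p b F))"
      unfolding Lift_def by blast
    show ?thesis unfolding err_def h(2) by (simp add: h(1))
  qed
  define x0 where "x0 = (a0, a0, coord p \<eta>0)"
  define FF where "FF = inf (nhds x0) (principal SE)"
  have ne: "FF \<noteq> bot" using cl closure_ne_bot unfolding FF_def SE_def x0_def by blast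
  have id: "((\<lambda>z. z) \<longlongrightarrow> x0) FF"
    unfolding FF_def by (rule tendsto_mono[OF inf_le1]) (rule filterlim_ident)
  have evSE: "eventually (\<lambda>x. x \<in> SE) FF"
    unfolding FF_def eventually_inf_principal by simp
  have errlim: "(err \<longlongrightarrow> 0) FF"
  proof (rule tendstoI)
    fix e :: real assume e: "e > 0"
    obtain r where r: "r > 0" "\<forall>a b. dist a a0 < r \<longrightarrow> dist b a0 < r \<longrightarrow> (\<forall>\<eta>. \<eta> \<in> dual p \<longrightarrow>
       (\<forall>\<alpha>\<in>midx p. norm (a - b) ^ (p - mabs \<alpha>) * \<bar>xi_alpha \<eta> \<alpha> b\<bar> \<le> 1) \<longrightarrow>
       \<bar>\<eta> (taylor p b F) - \<eta> (taylor p a F)\<bar> \<le> e / 2)"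
      using est[OF F, of "e / 2" a0] e by auto
    have ev1: "eventually (\<lambda>z. dist (fst z) a0 < r) FF"
      using ev_dist[OF tendsto_fst[OF id] r(1)] by (simp add: x0_def)
    have ev2: "eventually (\<lambda>z. dist (fst (snd z)) a0 < r) FF"
      using ev_dist[OF tendsto_fst[OF tendsto_snd[OF id]] r(1)] by (simp add: x0_def)
    show "eventually (\<lambda>z. dist (err z) 0 < e) FF"
      using ev1 ev2 evSE
    proof eventually_elim
      case (elim x)
      from LL[OF elim(3)] obtain a b \<xi> \<eta> where h: "(a, \<xi>) \<in> E" "(b, \<eta>) \<in> E"
        "\<forall>\<alpha>\<in>midx p. norm (a - b) ^ (p - mabs \<alpha>) * \<bar>xi_alpha \<eta> \<alpha> b\<bar> \<le> 1"
        "x = (a, b, coord p (\<lambda>P. \<xi> P + \<eta> P))"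
        "L x = (a, b, coord p (\<lambda>P. \<xi> P + \<eta> P), \<xi> (taylor p a F) + \<eta> (taylor p b F))"
        unfolding Lift_def by blast
      have xi: "\<xi> \<in> dual p" and eta: "\<eta> \<in> dual p" using h(1,2) LE by auto
      have "Psi p F a (coord p (\<lambda>P. \<xi> P + \<eta> P)) = \<xi> (taylor p a F) + \<eta> (taylor p a F)"
        using psi_eq[OF dual_add[OF xi eta]] by simp
      hence "err x = \<eta> (taylor p b F) - \<eta> (taylor p a F)"
        unfolding err_def h(5) by (simp add: h(4))
      moreover have "\<bar>\<eta> (taylor p b F) - \<eta> (taylor p a F)\<bar> \<le> e / 2"
        using r(2) elim(1,2) eta h(3) by (simp add: h(4))
      ultimately show ?case using e by simp
    qed
  qed
  have lim0: "((\<lambda>x. (fst x, fst (snd x), snd (snd x), Psi p F (fst x) (snd (snd x)) + err x))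
       \<longlongrightarrow> (a0, a0, coord p \<eta>0, Psi p F a0 (coord p \<eta>0) + 0)) FF"
  proof -
    have t1: "((\<lambda>x. fst x) \<longlongrightarrow> a0) FF" using tendsto_fst[OF id] by (simp add: x0_def)
    have t2: "((\<lambda>x. fst (snd x)) \<longlongrightarrow> a0) FF" using tendsto_fst[OF tendsto_snd[OF id]] by (simp add: x0_def)
    have t3: "((\<lambda>x. snd (snd x)) \<longlongrightarrow> coord p \<eta>0) FF" using tendsto_snd[OF tendsto_snd[OF id]] by (simp add: x0_def)
    show ?thesis
      by (intro tendsto_Pair t1 t2 t3 tendsto_add psi_tendsto[OF F t1 t3] errlim)
  qed
  have lim: "(L \<longlongrightarrow> (a0, a0, coord p \<eta>0, \<eta>0 (taylor p a0 F))) FF"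
  proof -
    have "eventually (\<lambda>x. (fst x, fst (snd x), snd (snd x), Psi p F (fst x) (snd (snd x)) + err x) = L x) FF"
      using evSE by eventually_elim (simp add: Lform)
    hence "(L \<longlongrightarrow> (a0, a0, coord p \<eta>0, Psi p F a0 (coord p \<eta>0) + 0)) FF"
      by (rule tendsto_cong[THEN iffD1, OF _ lim0])
    thus ?thesis using psi_eq[OF e0] by simp
  qed
  have "(a0, a0, coord p \<eta>0, \<eta>0 (taylor p a0 F)) \<in> closure SP"
  proof (rule Lim_in_closed_set[OF closed_closure _ ne lim])
    show "eventually (\<lambda>x. L x \<in> closure SP) FF"
      using evSE by eventually_elim (rule subsetD[OF closure_subset LSP])
  qed
  thus ?thesis unfolding Phiprime_def SP_def using a0 e0 by simp
qed

lemma lspan2_I: "finite T \<Longrightarrow> T \<subseteq> S \<Longrightarrow> v = ((\<lambda>P. \<Sum>w\<in>T. c w * fst w P), (\<Sum>w\<in>T. c w * snd w)) \<Longrightarrow> v \<in> lspan2 S"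
  unfolding lspan2_def by blast

lemma rhoPhi_sub:
  fixes F :: "real^'n::finite \<Rightarrow> real"
  assumes F: "Ck p F" and sub: "\<Phi> \<subseteq> GR p X F"
  shows "rhoPhi p X \<Phi> \<subseteq> GR p X F"
proof
  fix w assume "w \<in> rhoPhi p X \<Phi>"
  then obtain a v where w: "w = (a, v)" "a \<in> X" "v \<in> lspan2 {w. (a, w) \<in> Phiprime p X \<Phi>}"
    unfolding rhoPhi_def by blast
  then obtain T c where T: "finite T" "T \<subseteq> {w. (a, w) \<in> Phiprime p X \<Phi>}"
    "v = ((\<lambda>P. \<Sum>v\<in>T. c v * fst v P), (\<Sum>v\<in>T. c v * snd v))"
    unfolding lspan2_def by blast
  have G: "(a, fst u, snd u) \<in> GR p X F" if "u \<in> T" for u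
    using that T(2) phiprime_sub[OF F sub] by auto
  have d: "fst ` T \<subseteq> dual p" using G by (auto simp: GR_def)
  have sn: "snd u = fst u (taylor p a F)" if "u \<in> T" for u using G[OF that] by (auto simp: GR_def)
  have "(\<Sum>v\<in>T. c v * fst v (taylor p a F)) = (\<Sum>v\<in>T. c v * snd v)"
    by (rule sum.cong[OF refl]) (simp add: sn)
  hence "(\<lambda>P. \<Sum>v\<in>T. c v * fst v P) (taylor p a F) = (\<Sum>v\<in>T. c v * snd v)" by simp
  thus "w \<in> GR p X F" using w T dual_lin2[OF T(1) d, of c] by (simp add: GR_def)
qed

lemma Phi0_sub:
  fixes F :: "real^'n::finite \<Rightarrow> real"
  assumes "\<forall>x\<in>X. F x = f x"
  shows "Phi0 p X f \<subseteq> GR p X F"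
proof
  fix w assume "w \<in> Phi0 p X f"
  then obtain a l where w: "w = (a, (\<lambda>P. l * delta p a P), l * f a)" "a \<in> X" unfolding Phi0_def by blast
  have dt: "delta p a (taylor p a F) = f a" using w(2) assms by (simp add: delta_def taylor_in taylor_at)
  show "w \<in> GR p X F" unfolding GR_def using w dt delta_dual by simp
qed

lemma GR_all:
  fixes F :: "real^'n::finite \<Rightarrow> real"
  assumes F: "Ck p F" and "\<forall>x\<in>X. F x = f x"
  shows "(rhoPhi p X ^^ k) (Phi0 p X f) \<subseteq> GR p X F"
proof (induction k)
  case 0 show ?case using Phi0_sub[OF assms(2)] by simp
next
  case (Suc k) show ?case using rhoPhi_sub[OF F Suc.IH] by simp
qed

definition ZZ :: "nat \<Rightarrow> (real^'n::finite) set \<Rightarrow> ((real^'n) \<times> (((real^'n) \<Rightarrow> real) \<Rightarrow> real) \<times> real) set \<Rightarrow> bool" where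
  "ZZ p X \<Phi> \<longleftrightarrow> (\<forall>a \<xi> l. (a, \<xi>, l) \<in> \<Phi> \<longrightarrow> a \<in> X \<and> \<xi> \<in> dual p) \<and> (\<forall>a\<in>X. (a, (\<lambda>P. 0), 0) \<in> \<Phi>)"

lemma ZZ_Phi0: "ZZ p X (Phi0 p X f)"
proof -
  have "(a, (\<lambda>P. 0), 0) \<in> Phi0 p X f" if "a \<in> X" for a
  proof -
    have "(a, (\<lambda>P. 0 * delta p a P), 0 * f a) \<in> Phi0 p X f" unfolding Phi0_def using that by blast
    thus ?thesis by simp
  qed
  thus ?thesis unfolding ZZ_def Phi0_def by (auto simp: delta_dual)
qed

lemma ZZ_rho: "ZZ p X \<Phi> \<Longrightarrow> ZZ p X (rhoPhi p X \<Phi>)"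
proof -
  assume Z: "ZZ p X \<Phi>"
  have 1: "a \<in> X \<and> \<xi> \<in> dual p" if "(a, \<xi>, l) \<in> rhoPhi p X \<Phi>" for a \<xi> l
  proof -
    from that have a: "a \<in> X" and v: "(\<xi>, l) \<in> lspan2 {w. (a, w) \<in> Phiprime p X \<Phi>}"
      unfolding rhoPhi_def by auto
    then obtain T c where T: "finite T" "T \<subseteq> {w. (a, w) \<in> Phiprime p X \<Phi>}"
      "\<xi> = (\<lambda>P. \<Sum>v\<in>T. c v * fst v P)"
      unfolding lspan2_def by blast
    have "fst ` T \<subseteq> dual p" using T(2) by (auto simp: Phiprime_def)
    thus ?thesis using a T dual_lin2 by blast
  qed
  have 2: "(a, (\<lambda>P. 0), 0) \<in> rhoPhi p X \<Phi>" if "a \<in> X" for a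
  proof -
    have "((\<lambda>P. 0), 0) \<in> lspan2 {w. (a, w) \<in> Phiprime p X \<Phi>}"
      unfolding lspan2_def by (rule CollectI, rule exI[of _ "{}"], rule exI[of _ "\<lambda>_. 0"]) simp
    thus ?thesis unfolding rhoPhi_def using that by simp
  qed
  show ?thesis unfolding ZZ_def using 1 2 by blast
qed

lemma ZZ_infl: "ZZ p X \<Phi> \<Longrightarrow> \<Phi> \<subseteq> rhoPhi p X \<Phi>"
proof
  fix w assume Z: "ZZ p X \<Phi>" and w: "w \<in> \<Phi>"
  obtain a \<xi> l where wa: "w = (a, \<xi>, l)" by (cases w) auto
  have a: "a \<in> X" and xi: "\<xi> \<in> dual p" using Z w wa by (auto simp: ZZ_def)
  have z: "(a, (\<lambda>P. 0), 0) \<in> \<Phi>" using Z a by (auto simp: ZZ_def)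
  have xa: "xi_alpha (\<lambda>P. 0) \<alpha> a = 0" for \<alpha> :: "'a \<Rightarrow> nat" by (simp add: xi_alpha_def)
  have wl: "(a, \<xi>, l) \<in> \<Phi>" using w wa by simp
  have "(a, a, (\<lambda>P. \<xi> P + (\<lambda>P. 0) P), l + 0) \<in> Delta_Phi p X \<Phi>"
    unfolding Delta_Phi_def
    apply (rule CollectI)
    apply (rule exI[of _ a], rule exI[of _ a], rule exI[of _ \<xi>], rule exI[of _ l], rule exI[of _ "\<lambda>P. 0"], rule exI[of _ 0])
    using a wl z by (simp add: xa)
  hence "(a, a, \<xi>, l) \<in> Delta_Phi p X \<Phi>" by simp
  hence "(a, a, coord p \<xi>, l) \<in> (\<lambda>(a, b, \<eta>, m). (a, b, coord p \<eta>, m)) ` Delta_Phi p X \<Phi>"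
    by (rule rev_image_eqI) simp
  hence "(a, \<xi>, l) \<in> Phiprime p X \<Phi>"
    unfolding Phiprime_def using a xi closure_subset by blast
  hence "(\<xi>, l) \<in> lspan2 {w. (a, w) \<in> Phiprime p X \<Phi>}"
    by (intro lspan2_I[of "{(\<xi>, l)}" _ _ "\<lambda>_. 1"]) auto
  thus "w \<in> rhoPhi p X \<Phi>" unfolding rhoPhi_def using wa a by simp
qed

lemma ZZ_all: "ZZ p X ((rhoPhi p X ^^ k) (Phi0 p X f))"
  by (induction k) (auto simp: ZZ_Phi0 ZZ_rho)

lemma tau_lift:
  fixes F :: "real^'n::finite \<Rightarrow> real"
  assumes F: "Ck p F" and Ff: "\<forall>x\<in>X. F x = f x"
  shows "\<forall>a \<xi>. (a, \<xi>) \<in> (rho p X ^^ k) (E0 p X) \<longrightarrow>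
           a \<in> X \<and> \<xi> \<in> dual p \<and> (a, \<xi>, \<xi> (taylor p a F)) \<in> (rhoPhi p X ^^ k) (Phi0 p X f)"
proof (induction k)
  case 0
  show ?case
  proof (intro allI impI)
    fix a \<xi> assume "(a, \<xi>) \<in> (rho p X ^^ 0) (E0 p X)"
    then obtain l where h: "a \<in> X" "\<xi> = (\<lambda>P. l * delta p a P)" unfolding E0_def by auto
    have dt: "delta p a (taylor p a F) = f a" using h Ff by (simp add: delta_def taylor_in taylor_at)
    have mem: "(a, (\<lambda>P. l * delta p a P), l * f a) \<in> Phi0 p X f" unfolding Phi0_def using h by blast
    show "a \<in> X \<and> \<xi> \<in> dual p \<and> (a, \<xi>, \<xi> (taylor p a F)) \<in> (rhoPhi p X ^^ 0) (Phi0 p X f)"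
      using h(2) dt mem delta_dual h(1) by simp
  qed
next
  case (Suc k)
  let ?E = "(rho p X ^^ k) (E0 p X)" and ?\<Phi> = "(rhoPhi p X ^^ k) (Phi0 p X f)"
  have LE: "\<forall>a \<xi>. (a, \<xi>) \<in> ?E \<longrightarrow> a \<in> X \<and> \<xi> \<in> dual p \<and> (a, \<xi>, \<xi> (taylor p a F)) \<in> ?\<Phi>"
    using Suc.IH by blast
  show ?case
  proof (intro allI impI)
    fix a \<xi> assume "(a, \<xi>) \<in> (rho p X ^^ Suc k) (E0 p X)"
    hence a: "a \<in> X" and "\<xi> \<in> lspan {\<eta>. (a, \<eta>) \<in> Eprime p X ?E}"
      unfolding rho_def by auto
    then obtain T c where T: "finite T" "T \<subseteq> {\<eta>. (a, \<eta>) \<in> Eprime p X ?E}"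
      "\<xi> = (\<lambda>P. \<Sum>\<eta>\<in>T. c \<eta> * \<eta> P)"
      unfolding lspan_def by blast
    have Td: "T \<subseteq> dual p" using T(2) by (auto simp: Eprime_def)
    have lift: "(a, \<eta>, \<eta> (taylor p a F)) \<in> Phiprime p X ?\<Phi>" if "\<eta> \<in> T" for \<eta>
      using that T(2) by (intro eprime_lift[OF F LE]) auto
    define T' where "T' = (\<lambda>\<eta>. (\<eta>, \<eta> (taylor p a F))) ` T"
    have inj: "inj_on (\<lambda>\<eta>. (\<eta>, \<eta> (taylor p a F))) T" by (auto simp: inj_on_def)
    have s1: "(\<lambda>P. \<Sum>v\<in>T'. c (fst v) * fst v P) = \<xi>"
      unfolding T'_def T(3) by (simp add: sum.reindex[OF inj])
    have s2: "(\<Sum>v\<in>T'. c (fst v) * snd v) = \<xi> (taylor p a F)"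
      unfolding T'_def T(3) by (simp add: sum.reindex[OF inj])
    have "finite T'" "T' \<subseteq> {w. (a, w) \<in> Phiprime p X ?\<Phi>}"
      using T(1) lift by (auto simp: T'_def)
    hence "(\<xi>, \<xi> (taylor p a F)) \<in> lspan2 {w. (a, w) \<in> Phiprime p X ?\<Phi>}"
      using s1 s2 by (intro lspan2_I[of T' _ _ "\<lambda>v. c (fst v)"]) auto
    hence "(a, \<xi>, \<xi> (taylor p a F)) \<in> rhoPhi p X ?\<Phi>" unfolding rhoPhi_def using a by simp
    moreover have "\<xi> \<in> dual p" unfolding T(3) by (rule dual_lin[OF T(1) Td])
    ultimately show "a \<in> X \<and> \<xi> \<in> dual p \<and> (a, \<xi>, \<xi> (taylor p a F)) \<in> (rhoPhi p X ^^ Suc k) (Phi0 p X f)"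
      using a by simp
  qed
qed

theorem theorem1p1:
  fixes X :: "(real^'n::finite) set" and p :: nat and f F :: "real^'n \<Rightarrow> real"
  assumes "closed X"
    and "Ck p F"
    and "\<forall>x\<in>X. F x = f x"
  shows "(\<forall>a\<in>X. \<forall>\<xi>. (a, \<xi>) \<in> tau p X \<longrightarrow> (\<exists>!l. (a, \<xi>, l) \<in> nabla p X f))
       \<and> (\<forall>a\<in>X. \<forall>\<xi>. (a, \<xi>) \<in> tau p X \<longrightarrow> (a, \<xi>, \<xi> (taylor p a F)) \<in> nabla p X f)"
proof -
  let ?k = "2 * card (midx p :: ('n \<Rightarrow> nat) set)"
  let ?\<Phi> = "(rhoPhi p X ^^ ?k) (Phi0 p X f)"
  have nab: "nabla p X f = rhoPhi p X (rhoPhi p X ?\<Phi>)"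
    unfolding nabla_def by (simp add: algebra_simps)
  have sub: "?\<Phi> \<subseteq> nabla p X f"
  proof -
    have "?\<Phi> \<subseteq> rhoPhi p X ?\<Phi>" by (rule ZZ_infl[OF ZZ_all])
    also have "\<dots> \<subseteq> rhoPhi p X (rhoPhi p X ?\<Phi>)"
      using ZZ_infl[OF ZZ_all[of p X "Suc ?k" f]] by simp
    finally show ?thesis unfolding nab .
  qed
  have ex: "(a, \<xi>, \<xi> (taylor p a F)) \<in> nabla p X f" if "(a, \<xi>) \<in> tau p X" for a \<xi>
    using tau_lift[OF assms(2,3), of ?k] that sub unfolding tau_def by blast
  have un: "l = \<xi> (taylor p a F)" if "(a, \<xi>, l) \<in> nabla p X f" for a \<xi> l
  proof -
    have "nabla p X f \<subseteq> GR p X F" unfolding nabla_def by (rule GR_all[OF assms(2,3)])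
    thus ?thesis using that by (auto simp: GR_def)
  qed
  show ?thesis using ex un by blast
qed

end
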